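(* Let $\alpha=a/q+\beta$ with $a\in\mathbb{Z}$, $q\in\mathbb{N}$, $(a,q)=1$ and $|\beta|<1/q^2$. For $X\ge 2$, \[ \sum_{n\le X}|\mu(n)|\operatorname{e}(\alpha n)\ll \frac{X}{q}\log X+X^{\frac{8}{13}}(\log X)^{\frac{37}{13}}+q\log X. \]
   Context: $\operatorname{e}(x)=\exp(2\pi i x)$; $\mu$ is the Möbius function. $\ll$ denotes an inequality up to an absolute constant. *)

theory Defs
  imports "HOL-Analysis.Analysis" "HOL-Computational_Algebra.Squarefree"
begin

definition moebius_mu :: "nat \<Rightarrow> int" where
  "moebius_mu n = (if n \<noteq> 0 \<and> squarefree n then (-1) ^ card (prime_factors n) else 0)"

definition e :: "real \<Rightarrow> complex" where
  "e x = exp (2 * of_real pi * \<i> * of_real x)"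

end

theory Submission
  imports Defs "HOL-Analysis.Harmonic_Numbers"
begin


lemma mu_prime_mult:
  assumes p: "prime p" and np: "\<not> p dvd (k::nat)" and e0: "k > 0"
  shows "moebius_mu (p * k) = - moebius_mu k"
proof -
  have cop: "coprime p k" using prime_imp_coprime_nat[OF p np] .
  have sq: "squarefree (p * k) \<longleftrightarrow> squarefree k"
    using squarefree_multD(2)[of p k] squarefree_mult_coprime[OF cop squarefree_prime[OF p]] by blast
  have p0: "p \<noteq> 0" using p by auto
  have pf: "prime_factors (p * k) = insert p (prime_factors k)"
    using prime_factors_product[OF p0, of k] e0 p by (simp add: prime_prime_factors)
  have pn: "p \<notin> prime_factors k" using np by auto
  have "card (prime_factors (p * k)) = Suc (card (prime_factors k))"
    using pf pn by simp
  then show ?thesis using sq e0 p0 by (simp add: moebius_mu_def)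
qed

lemma mu_not_sqfree:
  assumes "prime p" "p dvd (k::nat)"
  shows "moebius_mu (p * k) = 0"
proof -
  have "p\<^sup>2 dvd p * k" using assms by (simp add: power2_eq_square)
  moreover have "\<not> is_unit p" using assms by auto
  ultimately have "\<not> squarefree (p * k)" unfolding squarefree_def by blast
  then show ?thesis by (simp add: moebius_mu_def)
qed

lemma abs_mu_eq_sum:
  assumes n0: "n > 0"
  shows "\<bar>moebius_mu n\<bar> = (\<Sum>d\<in>{d. d\<^sup>2 dvd n}. moebius_mu d)"
proof (cases "squarefree n")
  case True
  have "{d. d\<^sup>2 dvd n} = {1}"
    using True unfolding squarefree_def by auto
  then show ?thesis using True n0 by (simp add: moebius_mu_def)
next
  case False
  then obtain p where p: "prime p" and pn: "p\<^sup>2 dvd n"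
    using squarefree_factorial_semiring[of n] n0 by auto
  define A where "A = {d. d\<^sup>2 dvd n}"
  have finA: "finite A"
  proof -
    have "A \<subseteq> {..n}"
    proof
      fix d assume "d \<in> A"
      then have "d\<^sup>2 dvd n" by (simp add: A_def)
      then have "d\<^sup>2 \<le> n" using n0 by (simp add: dvd_imp_le)
      moreover have "d \<le> d\<^sup>2" by (simp add: power2_eq_square le_square)
      ultimately show "d \<in> {..n}" by simp
    qed
    then show ?thesis using finite_subset by blast
  qed
  have split: "sum moebius_mu A = sum moebius_mu {d\<in>A. p dvd d} + sum moebius_mu {d\<in>A. \<not> p dvd d}"
  proof -
    have "A = {d\<in>A. p dvd d} \<union> {d\<in>A. \<not> p dvd d}" by auto
    then have "sum moebius_mu A = sum moebius_mu ({d\<in>A. p dvd d} \<union> {d\<in>A. \<not> p dvd d})" by simp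
    also have "\<dots> = sum moebius_mu {d\<in>A. p dvd d} + sum moebius_mu {d\<in>A. \<not> p dvd d}"
      by (rule sum.union_disjoint) (use finA in auto)
    finally show ?thesis .
  qed
  define B where "B = {k. (p * k)\<^sup>2 dvd n}"
  have img: "{d\<in>A. p dvd d} = (\<lambda>k. p * k) ` B"
    unfolding A_def B_def by (auto elim!: dvdE)
  have injp: "inj_on (\<lambda>k. p * k) B" using p by (auto simp: inj_on_def prime_gt_0_nat)
  have finB: "finite B"
    using finA img injp finite_imageD[of "\<lambda>k. p * k" B] by (metis (no_types, lifting) finite_subset mem_Collect_eq subsetI)
  have s1: "sum moebius_mu {d\<in>A. p dvd d} = (\<Sum>k\<in>B. moebius_mu (p * k))"
    unfolding img by (rule sum.reindex[OF injp, unfolded comp_def])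
  also have "\<dots> = (\<Sum>k\<in>{k\<in>B. \<not> p dvd k}. moebius_mu (p * k))"
    by (rule sum.mono_neutral_right) (use finB mu_not_sqfree[OF p] in auto)
  also have "\<dots> = (\<Sum>k\<in>{k\<in>B. \<not> p dvd k}. - moebius_mu k)"
  proof (rule sum.cong)
    fix k assume "k \<in> {k\<in>B. \<not> p dvd k}"
    then have "\<not> p dvd k" "(p*k)\<^sup>2 dvd n" by (auto simp: B_def)
    then have "k > 0" using n0 by (cases "k = 0") auto
    then show "moebius_mu (p * k) = - moebius_mu k" using mu_prime_mult[OF p \<open>\<not> p dvd k\<close>] by simp
  qed simp
  also have "{k\<in>B. \<not> p dvd k} = {d\<in>A. \<not> p dvd d}"
  proof (intro set_eqI iffI)
    fix k assume "k \<in> {k\<in>B. \<not> p dvd k}"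
    then have "(p*k)\<^sup>2 dvd n" "\<not> p dvd k" by (auto simp: B_def)
    then have "k\<^sup>2 dvd n" by (metis dvd_mult_right power_mult_distrib)
    then show "k \<in> {d\<in>A. \<not> p dvd d}" using \<open>\<not> p dvd k\<close> by (simp add: A_def)
  next
    fix k assume "k \<in> {d\<in>A. \<not> p dvd d}"
    then have k2: "k\<^sup>2 dvd n" and nk: "\<not> p dvd k" by (auto simp: A_def)
    have "coprime (p\<^sup>2) (k\<^sup>2)" using prime_imp_coprime_nat[OF p nk] by simp
    then have "p\<^sup>2 * k\<^sup>2 dvd n" using divides_mult[OF pn k2] by simp
    then show "k \<in> {k\<in>B. \<not> p dvd k}" using nk by (simp add: B_def power_mult_distrib)
  qed
  finally have "sum moebius_mu {d\<in>A. p dvd d} = - sum moebius_mu {d\<in>A. \<not> p dvd d}"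
    by (simp add: sum_negf)
  then have "sum moebius_mu A = 0" using split by simp
  moreover have "moebius_mu n = 0" using False by (simp add: moebius_mu_def)
  ultimately show ?thesis by (simp add: A_def)
qed


definition nd :: "real \<Rightarrow> real" where "nd x = \<bar>x - of_int (round x)\<bar>"

lemma round_bounds: "x - 1/2 < of_int (round x)" "of_int (round x) \<le> x + 1/2"
  unfolding round_def by linarith+

lemma nd_le_half: "nd x \<le> 1/2"
  using round_bounds[of x] unfolding nd_def by linarith

lemma nd_nonneg: "nd x \<ge> 0" by (simp add: nd_def)

lemma nd_le: "nd x \<le> \<bar>x - of_int n\<bar>"
proof (cases "n = round x")
  case True then show ?thesis by (simp add: nd_def)
next
  case False
  then have "n \<ge> round x + 1 \<or> n \<le> round x - 1" by linarith
  then have "real_of_int n \<ge> of_int (round x) + 1 \<or> real_of_int n \<le> of_int (round x) - 1"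
    by (smt (verit) of_int_add of_int_diff of_int_le_iff of_int_1)
  then show ?thesis using round_bounds[of x] unfolding nd_def by linarith
qed

lemma nd_shift: "nd (x + of_int n) = nd x"
proof -
  have "nd (x + of_int n) \<le> nd x"
    using nd_le[of "x + of_int n" "round x + n"] by (simp add: nd_def)
  moreover have "nd x \<le> nd (x + of_int n)"
    using nd_le[of x "round (x + of_int n) - n"] by (simp add: nd_def)
  ultimately show ?thesis by simp
qed

lemma nd_minus: "nd (- x) = nd x"
proof -
  have "nd (- x) \<le> nd x" using nd_le[of "-x" "- round x"] by (simp add: nd_def)
  moreover have "nd x \<le> nd (-x)" using nd_le[of "x" "- round (-x)"] by (simp add: nd_def)
  ultimately show ?thesis by simp
qed

lemma nd_ge_min: assumes "0 \<le> x" "x \<le> 1" shows "nd x \<ge> min x (1 - x)"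
proof -
  have "round x \<le> 0 \<or> round x \<ge> 1" by linarith
  then have "real_of_int (round x) \<le> 0 \<or> real_of_int (round x) \<ge> 1" by (smt (verit) of_int_le_iff of_int_0 of_int_1)
  then show ?thesis using assms unfolding nd_def by auto
qed

lemma sin_ge_half:
  assumes "0 \<le> y" "y \<le> pi/2" shows "sin y \<ge> y / 3"
proof (cases "y \<le> pi/3")
  case True
  have mono: "\<And>u. 0 \<le> u \<Longrightarrow> u \<le> pi/3 \<Longrightarrow> sin u - u * cos u \<ge> sin 0 - 0 * cos 0"
  proof -
    fix u :: real assume u: "0 \<le> u" "u \<le> pi/3"
    show "sin u - u * cos u \<ge> sin 0 - 0 * cos 0"
    proof (rule DERIV_nonneg_imp_nondecreasing[of 0 u "\<lambda>v. sin v - v * cos v"])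
      show "0 \<le> u" by fact
      fix v :: real assume v: "0 \<le> v" "v \<le> u"
      show "\<exists>y. ((\<lambda>v. sin v - v * cos v) has_real_derivative y) (at v) \<and> 0 \<le> y"
      proof (intro exI conjI)
        show "((\<lambda>v. sin v - v * cos v) has_real_derivative (cos v - (1 * cos v + v * (- sin v)))) (at v)"
          by (auto intro!: derivative_eq_intros)
        have "sin v \<ge> 0" using v u pi_gt3 by (intro sin_ge_zero) auto
        then show "0 \<le> cos v - (1 * cos v + v * (- sin v))" using v by simp
      qed
    qed
  qed
  have c: "cos y \<ge> 1/2"
  proof -
    have "cos (pi/3) \<le> cos y" using True assms by (intro cos_monotone_0_pi_le) auto
    then show ?thesis by (simp add: cos_60)
  qed
  have "sin y \<ge> y * cos y" using mono[of y] True assms by simp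
  moreover have "y * cos y \<ge> y / 2" using c assms by (simp add: mult_left_mono[of "1/2" "cos y" y, simplified])
  ultimately show ?thesis using assms by linarith
next
  case False
  have "sin (pi/3) \<le> sin y" using False assms by (intro sin_monotone_2pi_le) auto
  then have "sin y \<ge> sqrt 3 / 2" by (simp add: sin_60)
  moreover have "sqrt 3 \<ge> 1.7" by (rule real_le_rsqrt) (simp add: power2_eq_square)
  moreover have "y / 3 \<le> 0.7" using assms pi_less_4 by linarith
  ultimately show ?thesis by linarith
qed

lemma e_add_int: "e (x + of_int n) = e x"
proof -
  have "e (x + of_int n) = exp (\<i> * (complex_of_int n * (complex_of_real pi * 2)) + 2 * of_real pi * \<i> * of_real x)"
    unfolding e_def by (simp add: algebra_simps)
  also have "\<dots> = exp (\<i> * (complex_of_int n * (complex_of_real pi * 2))) * exp (2 * of_real pi * \<i> * of_real x)"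
    by (rule exp_add)
  also have "\<dots> = e x" by (simp only: exp_2pi_1_int e_def) simp
  finally show ?thesis .
qed

lemma norm_e [simp]: "norm (e x) = 1"
proof -
  have "e x = exp (\<i> * complex_of_real (2 * pi * x))" unfolding e_def by (simp add: algebra_simps)
  then show ?thesis by (simp only: norm_exp_i_times)
qed

lemma e_diff_one: "norm (e x - 1) \<ge> 2 * nd x"
proof -
  define t where "t = x - of_int (round x)"
  have t: "\<bar>t\<bar> \<le> 1/2" "nd x = \<bar>t\<bar>" using nd_le_half[of x] by (auto simp: t_def nd_def)
  have "e x = e (t + of_int (round x))" by (simp add: t_def)
  also have "\<dots> = e t" by (rule e_add_int)
  finally have "norm (e x - 1) = norm (exp (\<i> * complex_of_real (2 * pi * t)) - 1)"
    unfolding e_def by (simp add: algebra_simps)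
  also have "\<dots> = 2 * \<bar>sin (pi * t)\<bar>" by (simp only: dist_exp_i_1) simp
  also have "\<bar>sin (pi * t)\<bar> = sin (pi * \<bar>t\<bar>)"
  proof -
    have "sin (pi * \<bar>t\<bar>) \<ge> 0" using t by (intro sin_ge_zero) auto
    moreover have "sin (pi * t) = sin (pi * \<bar>t\<bar>) \<or> sin (pi * t) = - sin (pi * \<bar>t\<bar>)"
      by (cases "t \<ge> 0") (simp_all add: abs_if)
    ultimately show ?thesis by auto
  qed
  finally have eq: "norm (e x - 1) = 2 * sin (pi * \<bar>t\<bar>)" .
  have "sin (pi * \<bar>t\<bar>) \<ge> pi * \<bar>t\<bar> / 3" using t by (intro sin_ge_half) auto
  then have "norm (e x - 1) \<ge> 2 * (pi * \<bar>t\<bar> / 3)" unfolding eq by simp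
  moreover have "pi * \<bar>t\<bar> / 3 \<ge> \<bar>t\<bar>" using pi_gt3 mult_right_mono[of 3 pi "\<bar>t\<bar>"] by simp
  ultimately show ?thesis using t by simp
qed

definition gm :: "real \<Rightarrow> real \<Rightarrow> real" where
  "gm M t = (if t = 0 then M else min M (1 / t))"

lemma gm_le_M: "gm M t \<le> M" by (simp add: gm_def)
lemma gm_le_inv: "t > 0 \<Longrightarrow> gm M t \<le> 1 / t" by (simp add: gm_def)
lemma gm_mono: "M \<le> M' \<Longrightarrow> gm M t \<le> gm M' t" by (auto simp: gm_def)
lemma gm_nonneg: "M \<ge> 0 \<Longrightarrow> t \<ge> 0 \<Longrightarrow> gm M t \<ge> 0" by (auto simp: gm_def)

lemma e_mult_nat: "e (\<theta> * real m) = e \<theta> ^ m"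
  unfolding e_def by (simp add: algebra_simps flip: exp_of_nat_mult)

lemma geo_sum:
  "norm (\<Sum>m\<in>{1..L}. e (\<theta> * real m)) \<le> gm (real L) (nd \<theta>)"
proof -
  have triv: "norm (\<Sum>m\<in>{1..L}. e (\<theta> * real m)) \<le> real L"
    using norm_sum[of "\<lambda>m. e (\<theta> * real m)" "{1..L}"] by simp
  show ?thesis
  proof (cases "nd \<theta> = 0")
    case True then show ?thesis using triv by (simp add: gm_def)
  next
    case False
    then have ndp: "nd \<theta> > 0" using nd_nonneg[of \<theta>] by simp
    define z where "z = e \<theta>"
    have zn: "norm (z - 1) \<ge> 2 * nd \<theta>" using e_diff_one by (simp add: z_def)
    have zpos: "norm (z - 1) > 0" using zn ndp by linarith
    then have z1: "z \<noteq> 1" by auto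
    have "(\<Sum>m\<in>{1..L}. e (\<theta> * real m)) = (\<Sum>m\<in>{1..L}. z ^ m)" by (simp add: e_mult_nat z_def)
    also have "\<dots> = z * (\<Sum>m<L. z ^ m)"
    proof -
      have "{1..L} = Suc ` {..<L}" using atLeast1_atMost_eq_remove0 lessThan_Suc_atMost image_Suc_lessThan by auto
      then show ?thesis by (simp add: sum.reindex sum_distrib_left)
    qed
    also have "\<dots> = z * ((z ^ L - 1) / (z - 1))" using z1 by (simp add: geometric_sum)
    finally have eq: "(\<Sum>m\<in>{1..L}. e (\<theta> * real m)) = z * ((z ^ L - 1) / (z - 1))" .
    have nz: "norm z = 1" by (simp add: z_def)
    have "norm (z ^ L - 1) \<le> 2"
      using norm_triangle_ineq4[of "z ^ L" 1] by (simp add: norm_power nz)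
    then have "norm (\<Sum>m\<in>{1..L}. e (\<theta> * real m)) \<le> 2 / norm (z - 1)"
      unfolding eq using z1 by (simp add: norm_mult norm_divide nz divide_right_mono)
    also have "\<dots> \<le> 2 / (2 * nd \<theta>)"
      by (rule divide_left_mono) (use zn ndp zpos in auto)
    also have "\<dots> = 1 / nd \<theta>" using ndp by simp
    finally show ?thesis using triv ndp by (simp add: gm_def)
  qed
qed


lemma harm_le_ln: "harm n \<le> 1 + ln (real n)"
proof (cases n)
  case 0 then show ?thesis by (simp add: harm_def)
next
  case (Suc m)
  have "harm (Suc m) - ln (real (Suc m)) \<le> harm (Suc 0) - ln (real (Suc 0))"
    using decseq_harm_diff_ln unfolding monotone_on_def by (metis UNIV_I zero_le)
  then show ?thesis using Suc by (simp add: harm_def)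
qed

lemma sum_inv_harm: "(\<Sum>j\<in>{1..n}. c / real j) = c * harm n"
  by (simp add: harm_def sum_distrib_left divide_inverse)

lemma sum_le_inj:
  fixes f :: "'a \<Rightarrow> real" and h :: "'b \<Rightarrow> real"
  assumes "finite T" "inj_on g S" "g ` S \<subseteq> T" "\<And>s. s \<in> S \<Longrightarrow> f s \<le> h (g s)" "\<And>t. t \<in> T \<Longrightarrow> h t \<ge> 0"
  shows "(\<Sum>s\<in>S. f s) \<le> (\<Sum>t\<in>T. h t)"
proof -
  have finS: "finite S" using assms(1-3) finite_imageD finite_subset by blast
  have "(\<Sum>s\<in>S. f s) \<le> (\<Sum>s\<in>S. h (g s))" using assms(4) by (rule sum_mono)
  also have "\<dots> = (\<Sum>t\<in>g ` S. h t)" using assms(2) by (simp add: sum.reindex)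
  also have "\<dots> \<le> (\<Sum>t\<in>T. h t)" using assms by (intro sum_mono2) auto
  finally show ?thesis .
qed

lemma int_dvd_small:
  assumes "(q::int) dvd d" "\<bar>d\<bar> < q" shows "d = 0"
proof (rule ccontr)
  assume "d \<noteq> 0"
  then have "\<bar>q\<bar> \<le> \<bar>d\<bar>" using dvd_imp_le_int assms(1) by blast
  then show False using assms(2) by linarith
qed

locale dioph =
  fixes a :: int and q :: nat and \<beta> :: real and al :: real
  assumes q1: "q \<ge> 1" and cop: "coprime a (int q)" and beta: "\<bar>\<beta>\<bar> < 1 / (real q)^2"
    and al: "al = real_of_int a / real q + \<beta>"
begin

lemma beta_q: "\<bar>\<beta>\<bar> * real q * real q < 1"
  using beta q1 by (simp add: field_simps power2_eq_square)

lemma inj_mod: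
  assumes "k1 \<in> {b+1..b+q}" "k2 \<in> {b+1..b+q}" "(a * int k1 + c) mod int q = (a * int k2 + c) mod int q"
  shows "k1 = k2"
proof -
  have "int q dvd (a * int k1 + c) - (a * int k2 + c)" using assms(3) by (simp add: mod_eq_dvd_iff)
  then have "int q dvd a * (int k1 - int k2)" by (simp add: algebra_simps)
  then have "int q dvd (int k1 - int k2)" using cop by (simp add: coprime_dvd_mult_right_iff coprime_commute)
  moreover have "\<bar>int k1 - int k2\<bar> < int q" using assms(1,2) by auto
  ultimately have "int k1 - int k2 = 0" by (rule int_dvd_small)
  then show ?thesis by simp
qed

lemma block:
  assumes M: "M \<ge> 0"
  shows "(\<Sum>k\<in>{b+1..b+q}. gm M (nd (al * real k))) \<le> 4 * M + 2 * q * (1 + ln q)"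
proof -
  define c where "c = \<lfloor>real q * \<beta> * real b\<rfloor>"
  define \<eta> where "\<eta> = real q * \<beta> * real b - of_int c"
  have eta: "0 \<le> \<eta>" "\<eta> < 1" unfolding \<eta>_def c_def by linarith+
  define \<sigma> where "\<sigma> k = nat ((a * int k + c) mod int q)" for k
  define G where "G = {s. 2 \<le> s \<and> s + 3 \<le> q}"
  define \<psi> where "\<psi> s = (if s \<in> G then real q / (real s - 1) + real q / (real q - real s - 2) else M)" for s
  have qpos: "real q > 0" using q1 by simp
  have key: "gm M (nd (al * real k)) \<le> \<psi> (\<sigma> k)" if k: "k \<in> {b+1..b+q}" for k
  proof (cases "\<sigma> k \<in> G")
    case False then show ?thesis by (simp add: \<psi>_def gm_le_M)
  next
    case True
    define u where "u = a * int k + c"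
    define s where "s = u mod int q"
    define t where "t = u div int q"
    have s0: "0 \<le> s" "s < int q" using q1 by (auto simp: s_def)
    have sig: "\<sigma> k = nat s" by (simp add: \<sigma>_def s_def u_def)
    have us: "real_of_int u = real q * of_int t + of_int s"
      by (metis div_mult_mod_eq of_int_add of_int_mult of_int_of_nat_eq s_def t_def mult.commute)
    define \<rho> where "\<rho> = \<eta> + real q * \<beta> * (real k - real b)"
    have kb: "0 \<le> real k - real b" "real k - real b \<le> real q" using k by auto
    have "\<bar>real q * \<beta> * (real k - real b)\<bar> \<le> real q * \<bar>\<beta>\<bar> * real q"
      using kb qpos by (simp add: abs_mult mult_left_mono)
    also have "\<dots> < 1" using beta_q by (simp add: mult.commute mult.left_commute)
    finally have rho: "-1 < \<rho>" "\<rho> < 2" using eta unfolding \<rho>_def by (simp_all add: abs_less_iff)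
    have eq: "al * real k = (of_int s + \<rho>) / real q + of_int t"
    proof -
      have "real_of_int u = real_of_int a * real k + of_int c" by (simp add: u_def)
      then have "real_of_int a * real k = real q * of_int t + of_int s - of_int c" using us by simp
      then show ?thesis unfolding al \<rho>_def \<eta>_def using qpos by (simp add: field_simps)
    qed
    have nd_eq: "nd (al * real k) = nd ((of_int s + \<rho>) / real q)" unfolding eq by (rule nd_shift)
    have sG: "2 \<le> s" "s + 3 \<le> int q" using True sig s0 by (auto simp: G_def)
    define x where "x = (of_int s + \<rho>) / real q"
    have x1: "x \<ge> (of_int s - 1) / real q" "x \<le> (of_int s + 2) / real q"
      using rho qpos by (auto simp: x_def divide_right_mono)
    have sr: "real_of_int s \<ge> 2" "real_of_int s + 3 \<le> real q" using sG by linarith+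
    have "(of_int s - 1) / real q \<ge> 0" using sr qpos by simp
    moreover have "(of_int s + 2) / real q \<le> 1" using sr qpos by simp
    ultimately have x01: "0 \<le> x" "x \<le> 1" using x1 by linarith+
    have ndx: "nd x \<ge> min ((of_int s - 1) / real q) ((real q - of_int s - 2) / real q)"
    proof -
      have "nd x \<ge> min x (1 - x)" using x01 by (rule nd_ge_min)
      moreover have "1 - x \<ge> (real q - of_int s - 2) / real q"
        using x1(2) qpos by (simp add: field_simps)
      ultimately show ?thesis using x1(1) by linarith
    qed
    have pos1: "(of_int s - 1) / real q > 0" using sr qpos by simp
    have pos2: "(real q - of_int s - 2) / real q > 0" using sr qpos by simp
    have ndpos: "nd x > 0" using ndx pos1 pos2 by linarith
    have "gm M (nd (al * real k)) \<le> 1 / nd x" using nd_eq ndpos gm_le_inv x_def by simp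
    also have "\<dots> \<le> 1 / min ((of_int s - 1) / real q) ((real q - of_int s - 2) / real q)"
      using ndx pos1 pos2 ndpos by (intro divide_left_mono) auto
    also have "\<dots> \<le> real q / (of_int s - 1) + real q / (real q - of_int s - 2)"
      using pos1 pos2 sr qpos by (cases "(of_int s - 1) / real q \<le> (real q - of_int s - 2) / real q") (auto simp: min_def)
    also have "\<dots> = \<psi> (\<sigma> k)" using True sig s0 by (simp add: \<psi>_def)
    finally show ?thesis .
  qed
  have "(\<Sum>k\<in>{b+1..b+q}. gm M (nd (al * real k))) \<le> (\<Sum>s\<in>{..<q}. \<psi> s)"
  proof (rule sum_le_inj[where g = \<sigma>])
    show "inj_on \<sigma> {b+1..b+q}"
    proof (rule inj_onI)
      fix k1 k2 assume h: "k1 \<in> {b+1..b+q}" "k2 \<in> {b+1..b+q}" "\<sigma> k1 = \<sigma> k2"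
      have "(a * int k1 + c) mod int q = (a * int k2 + c) mod int q"
        using h(3) q1 unfolding \<sigma>_def by (simp add: nat_eq_iff2)
      then show "k1 = k2" using inj_mod[OF h(1,2)] by blast
    qed
    show "\<sigma> ` {b+1..b+q} \<subseteq> {..<q}" using q1 by (auto simp: \<sigma>_def nat_less_iff)
    show "\<psi> t \<ge> 0" for t using M by (auto simp: \<psi>_def G_def)
  qed (use key in auto)
  also have "(\<Sum>s\<in>{..<q}. \<psi> s) = (\<Sum>s\<in>{..<q} \<inter> G. real q / (real s - 1) + real q / (real q - real s - 2)) + (\<Sum>s\<in>{..<q} - G. M)"
    unfolding \<psi>_def by (simp add: sum.If_cases Diff_eq)
  also have "(\<Sum>s\<in>{..<q} - G. M) \<le> 4 * M"
  proof -
    have "{..<q} - G \<subseteq> {0, 1, q - 2, q - 1}" by (auto simp: G_def)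
    then have "card ({..<q} - G) \<le> card {0, 1, q - 2, q - 1}" by (intro card_mono) auto
    also have "\<dots> \<le> 4" by (simp add: card_insert_if)
    finally show ?thesis using M by (simp add: mult_right_mono)
  qed
  also have "(\<Sum>s\<in>{..<q} \<inter> G. real q / (real s - 1) + real q / (real q - real s - 2)) \<le> 2 * q * (1 + ln q)"
  proof -
    have A: "(\<Sum>s\<in>{..<q} \<inter> G. real q / (real s - 1)) \<le> (\<Sum>j\<in>{1..q}. real q / real j)"
      by (rule sum_le_inj[where g = "\<lambda>s. s - 1"]) (auto simp: G_def inj_on_def of_nat_diff)
    have B: "(\<Sum>s\<in>{..<q} \<inter> G. real q / (real q - real s - 2)) \<le> (\<Sum>j\<in>{1..q}. real q / real j)"
      by (rule sum_le_inj[where g = "\<lambda>s. q - s - 2"]) (auto simp: G_def inj_on_def of_nat_diff diff_diff_eq add.commute)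
    have "(\<Sum>j\<in>{1..q}. real q / real j) \<le> q * (1 + ln q)"
      unfolding sum_inv_harm using harm_le_ln[of q] qpos by (intro mult_left_mono) auto
    then show ?thesis using A B by (simp add: sum.distrib)
  qed
  finally show ?thesis by simp
qed


lemma sum_blocks:
  fixes f :: "nat \<Rightarrow> real"
  shows "(\<Sum>k\<in>{1..H*q}. f k) = (\<Sum>h<H. (\<Sum>k\<in>{h*q+1..h*q+q}. f k))"
proof (induction H)
  case 0 then show ?case by simp
next
  case (Suc H)
  have "(\<Sum>k\<in>{1..Suc H*q}. f k) = (\<Sum>k\<in>{1..H*q + q}. f k)" by (simp add: add.commute)
  also have "\<dots> = (\<Sum>k\<in>{1..H*q}. f k) + (\<Sum>k\<in>{H*q+1..H*q+q}. f k)"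
    by (rule sum.ub_add_nat) simp
  finally show ?case using Suc by simp
qed

lemma flat:
  assumes M: "M \<ge> 0"
  shows "(\<Sum>k\<in>{1..K}. gm M (nd (al * real k))) \<le> (real K / real q + 1) * (4 * M + 2 * q * (1 + ln q))"
proof -
  define H where "H = K div q + 1"
  have qpos: "real q > 0" using q1 by simp
  have KH: "K \<le> H * q"
  proof -
    have "K = K div q * q + K mod q" by simp
    moreover have "K mod q < q" using q1 by simp
    ultimately show ?thesis unfolding H_def distrib_right by linarith
  qed
  have lnq: "ln (real q) \<ge> 0" using q1 by simp
  have B0: "0 \<le> 4 * M + 2 * q * (1 + ln q)" using M lnq by simp
  have "(\<Sum>k\<in>{1..K}. gm M (nd (al * real k))) \<le> (\<Sum>k\<in>{1..H*q}. gm M (nd (al * real k)))"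
    using KH M by (intro sum_mono2) (auto intro: gm_nonneg nd_nonneg)
  also have "\<dots> = (\<Sum>h<H. (\<Sum>k\<in>{h*q+1..h*q+q}. gm M (nd (al * real k))))" by (rule sum_blocks)
  also have "\<dots> \<le> (\<Sum>h<H. 4 * M + 2 * q * (1 + ln q))" using block[OF M] by (intro sum_mono) auto
  also have "\<dots> = real H * (4 * M + 2 * q * (1 + ln q))" by simp
  also have "\<dots> \<le> (real K / real q + 1) * (4 * M + 2 * q * (1 + ln q))"
  proof (rule mult_right_mono[OF _ B0])
    have "K div q * q \<le> K" by (metis div_mult_mod_eq le_add1)
    then have "real (K div q) * real q \<le> real K" by (metis of_nat_le_iff of_nat_mult)
    then have "real (K div q) \<le> real K / real q" using qpos by (simp add: field_simps)
    then show "real H \<le> real K / real q + 1" by (simp add: H_def)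
  qed
  finally show ?thesis .
qed

lemma small_k:
  "(\<Sum>k\<in>{k. 1 \<le> k \<and> 2 * k < q}. gm M (nd (al * real k))) \<le> 4 * q * (1 + ln q)"
proof -
  define F where "F = {k. 1 \<le> k \<and> 2 * k < q}"
  define \<sigma> where "\<sigma> k = nat ((a * int k) mod int q)" for k
  have qpos: "real q > 0" using q1 by simp
  have sig: "1 \<le> \<sigma> k \<and> \<sigma> k < q" if "k \<in> F" for k
  proof -
    have k: "1 \<le> k" "2 * k < q" using that by (auto simp: F_def)
    have "\<not> int q dvd a * int k"
    proof
      assume "int q dvd a * int k"
      then have "int q dvd int k" using cop by (simp add: coprime_dvd_mult_right_iff coprime_commute)
      then have "q dvd k" by simp
      then show False using k by (auto dest: dvd_imp_le)
    qed
    then have "(a * int k) mod int q \<noteq> 0" by (simp add: dvd_eq_mod_eq_0)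
    moreover have "0 \<le> (a * int k) mod int q" "(a * int k) mod int q < int q" using q1 by auto
    ultimately show ?thesis by (auto simp: \<sigma>_def)
  qed
  have key: "gm M (nd (al * real k)) \<le> 2 * real q / real (\<sigma> k) + 2 * real q / real (q - \<sigma> k)" if kF: "k \<in> F" for k
  proof -
    have k: "1 \<le> k" "2 * k < q" using kF by (auto simp: F_def)
    define s where "s = (a * int k) mod int q"
    define t where "t = (a * int k) div int q"
    have ss: "\<sigma> k = nat s" by (simp add: \<sigma>_def s_def)
    have s1: "1 \<le> s" "s < int q" using sig[OF kF] ss by auto
    have us: "real_of_int a * real k = real q * of_int t + of_int s"
      by (metis div_mult_mod_eq of_int_add of_int_mult of_int_of_nat_eq s_def t_def mult.commute)
    define \<rho> where "\<rho> = real q * \<beta> * real k"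
    have "\<bar>\<rho>\<bar> = real q * \<bar>\<beta>\<bar> * real k" by (simp add: \<rho>_def abs_mult)
    also have "\<dots> \<le> real q * \<bar>\<beta>\<bar> * (real q / 2)" using k by (intro mult_left_mono) auto
    also have "\<dots> < 1/2" using beta_q by (simp add: field_simps)
    finally have rho: "\<bar>\<rho>\<bar> < 1/2" .
    have eq: "al * real k = (of_int s + \<rho>) / real q + of_int t"
      unfolding al \<rho>_def using us qpos by (simp add: field_simps)
    define x where "x = (of_int s + \<rho>) / real q"
    have nd_eq: "nd (al * real k) = nd x" unfolding eq x_def by (rule nd_shift)
    have sr: "real_of_int s \<ge> 1" "real_of_int s + 1 \<le> real q" using s1 by linarith+
    have x1: "x \<ge> (of_int s - 1/2) / real q" "x \<le> (of_int s + 1/2) / real q"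
      using rho qpos by (auto simp: x_def divide_right_mono)
    have "(of_int s - 1/2) / real q \<ge> 0" using sr qpos by simp
    moreover have "(of_int s + 1/2) / real q \<le> 1" using sr qpos by simp
    ultimately have x01: "0 \<le> x" "x \<le> 1" using x1 by linarith+
    have "(of_int s / 2) / real q \<le> (of_int s - 1/2) / real q" using sr qpos by (intro divide_right_mono) auto
    then have m1: "x \<ge> (of_int s / 2) / real q" using x1 by linarith
    have m2: "1 - x \<ge> ((real q - of_int s) / 2) / real q" using x1 sr qpos by (simp add: field_simps)
    have ndx: "nd x \<ge> min (of_int s / 2 / real q) ((real q - of_int s) / 2 / real q)"
      using nd_ge_min[OF x01] m1 m2 by linarith
    have pos1: "of_int s / 2 / real q > 0" using sr qpos by simp
    have pos2: "(real q - of_int s) / 2 / real q > 0" using sr qpos by simp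
    have ndpos: "nd x > 0" using ndx pos1 pos2 by linarith
    have "gm M (nd (al * real k)) \<le> 1 / nd x" using nd_eq ndpos gm_le_inv by simp
    also have "\<dots> \<le> 1 / min (of_int s / 2 / real q) ((real q - of_int s) / 2 / real q)"
      using ndx pos1 pos2 ndpos by (intro divide_left_mono) auto
    also have "\<dots> \<le> 2 * real q / of_int s + 2 * real q / (real q - of_int s)"
      using pos1 pos2 sr qpos by (cases "of_int s / 2 / real q \<le> (real q - of_int s) / 2 / real q") (auto simp: min_def)
    also have "\<dots> = 2 * real q / real (\<sigma> k) + 2 * real q / real (q - \<sigma> k)"
      using ss s1 by (simp add: of_nat_diff)
    finally show ?thesis .
  qed
  have injs: "inj_on \<sigma> F"
  proof (rule inj_onI)
    fix k1 k2 assume h: "k1 \<in> F" "k2 \<in> F" "\<sigma> k1 = \<sigma> k2"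
    have "(a * int k1 + 0) mod int q = (a * int k2 + 0) mod int q"
      using h(3) q1 unfolding \<sigma>_def by (simp add: nat_eq_iff2)
    moreover have "k1 \<in> {0+1..0+q}" "k2 \<in> {0+1..0+q}" using h(1,2) by (auto simp: F_def)
    ultimately show "k1 = k2" using inj_mod by blast
  qed
  have hq: "(\<Sum>j\<in>{1..q}. 2 * real q / real j) \<le> 2 * q * (1 + ln q)"
  proof -
    have "2 * real q * harm q \<le> 2 * real q * (1 + ln q)" using harm_le_ln[of q] qpos by (intro mult_left_mono) auto
    then show ?thesis unfolding sum_inv_harm by simp
  qed
  have A: "(\<Sum>k\<in>F. 2 * real q / real (\<sigma> k)) \<le> (\<Sum>j\<in>{1..q}. 2 * real q / real j)"
    by (rule sum_le_inj[where g = \<sigma>]) (use injs sig in \<open>auto simp: less_imp_le_nat\<close>)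
  have B: "(\<Sum>k\<in>F. 2 * real q / real (q - \<sigma> k)) \<le> (\<Sum>j\<in>{1..q}. 2 * real q / real j)"
  proof (rule sum_le_inj[where g = "\<lambda>k. q - \<sigma> k"])
    show "inj_on (\<lambda>k. q - \<sigma> k) F"
      using injs sig unfolding inj_on_def by (metis diff_diff_cancel less_imp_le_nat)
  qed (use sig in \<open>auto simp: Suc_le_eq\<close>)
  have "(\<Sum>k\<in>F. gm M (nd (al * real k))) \<le> (\<Sum>k\<in>F. 2 * real q / real (\<sigma> k) + 2 * real q / real (q - \<sigma> k))"
    using key by (rule sum_mono)
  also have "\<dots> \<le> 4 * q * (1 + ln q)" using A B hq by (simp add: sum.distrib)
  finally show ?thesis by (simp add: F_def)
qed

end


definition tau :: "nat \<Rightarrow> nat" where "tau n = card {d. d dvd n}"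

lemma finite_divisors_nat': "n > 0 \<Longrightarrow> finite {d::nat. d dvd n}"
  by (rule finite_subset[of _ "{..n}"]) (auto dest: dvd_imp_le)

lemma tau_mult_prime_pow:
  assumes p: "prime p" and m0: "m > 0"
  shows "tau (p ^ a * m) \<le> (a + 1) * tau m"
proof -
  have sub: "{d. d dvd p ^ a * m} \<subseteq> (\<lambda>(i, e). p ^ i * e) ` ({..a} \<times> {d. d dvd m})"
  proof
    fix d assume "d \<in> {d. d dvd p ^ a * m}"
    then obtain d1 d2 where "d = d1 * d2" "d1 dvd p ^ a" "d2 dvd m"
      using division_decomp by blast
    moreover then obtain i where "i \<le> a" "d1 = p ^ i" using divides_primepow_nat[OF p] by blast
    ultimately show "d \<in> (\<lambda>(i, e). p ^ i * e) ` ({..a} \<times> {d. d dvd m})" by force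
  qed
  have fin: "finite ({..a} \<times> {d. d dvd m})" using finite_divisors_nat'[OF m0] by simp
  have "tau (p ^ a * m) \<le> card ((\<lambda>(i, e). p ^ i * e) ` ({..a} \<times> {d. d dvd m}))"
    unfolding tau_def using sub fin by (intro card_mono) auto
  also have "\<dots> \<le> card ({..a} \<times> {d. d dvd m})" using fin by (rule card_image_le)
  also have "\<dots> = (a + 1) * tau m" by (simp add: card_cartesian_product tau_def)
  finally show ?thesis .
qed

definition eps_d :: real where "eps_d = 1/260"
definition P0 :: nat where "P0 = 2 ^ 260"
definition Bd :: real where "Bd = 260 / ln 2"

lemma Bd_ge1: "Bd \<ge> 1"
proof -
  have "ln (2::real) \<le> 2 - 1" by (rule ln_le_minus_one) simp
  then show ?thesis unfolding Bd_def by (simp add: field_simps)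
qed

lemma num_small: "real (a + 1) \<le> Bd * real p powr (real a * eps_d)" if "p \<ge> 2" for a p :: nat
proof -
  have "(2::real) powr (real a * eps_d) = exp (real a * eps_d * ln 2)" by (simp add: powr_def)
  also have "\<dots> \<ge> 1 + real a * eps_d * ln 2" by (rule exp_ge_add_one_self)
  finally have h: "2 powr (real a * eps_d) \<ge> 1 + real a * eps_d * ln 2" .
  have "Bd * (1 + real a * eps_d * ln 2) = Bd + real a" by (simp add: Bd_def eps_d_def field_simps)
  also have "\<dots> \<ge> real (a + 1)" using Bd_ge1 by simp
  finally have "real (a+1) \<le> Bd * 2 powr (real a * eps_d)"
    using h Bd_ge1 by (smt (verit) mult_left_mono)
  also have "\<dots> \<le> Bd * real p powr (real a * eps_d)" using that Bd_ge1
    by (intro mult_left_mono powr_mono2) (auto simp: eps_d_def)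
  finally show ?thesis .
qed

lemma num_large: "real (a + 1) \<le> real p powr (real a * eps_d)" if "p \<ge> P0" for a p :: nat
proof -
  have "real (a + 1) \<le> 2 ^ a" by (induction a) auto
  also have "(2::real) ^ a = real P0 powr (real a * eps_d)"
  proof -
    have h: "real P0 = 2 powr (260::real)" using powr_realpow[of 2 260] by (simp add: P0_def)
    have "real P0 powr (real a * eps_d) = 2 powr (260 * (real a * eps_d))" unfolding h by (rule powr_powr)
    also have "\<dots> = 2 powr (real a)" by (simp add: eps_d_def)
    also have "\<dots> = 2 ^ a" by (simp add: powr_realpow)
    finally show ?thesis by simp
  qed
  also have "\<dots> \<le> real p powr (real a * eps_d)" using that
    by (intro powr_mono2) (auto simp: eps_d_def P0_def)
  finally show ?thesis .
qed

lemma tau_bound_aux: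
  "n > 0 \<Longrightarrow> real (tau n) \<le> Bd ^ card {p. prime p \<and> p < P0 \<and> p dvd n} * real n powr eps_d"
proof (induction n rule: less_induct)
  case (less n)
  show ?case
  proof (cases "n = 1")
    case True
    then show ?thesis using Bd_ge1 by (simp add: tau_def one_le_power)
  next
    case False
    then obtain p where p: "prime p" "p dvd n" using prime_factor_nat by blast
    define a where "a = multiplicity p n"
    define m where "m = n div p ^ a"
    have n0: "n \<noteq> 0" using less by simp
    have nu: "\<not> is_unit p" using p by auto
    have pa: "p ^ a dvd n" unfolding a_def by (rule multiplicity_dvd)
    have nm: "n = p ^ a * m" unfolding m_def using pa by simp
    have npm: "\<not> p dvd m" unfolding m_def a_def using multiplicity_decompose[OF n0 nu] .
    have a1: "a \<ge> 1" unfolding a_def using prime_multiplicity_gt_zero_iff[of p n] p n0 by auto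
    have m0: "m > 0" using nm n0 by (cases "m = 0") auto
    have p2: "p \<ge> 2" using p by (simp add: prime_ge_2_nat)
    have "p ^ a \<ge> p ^ 1" using p2 a1 by (intro power_increasing) auto
    then have pa2: "p ^ a \<ge> 2" using p2 by simp
    have "1 * m < p ^ a * m" using m0 pa2 by (intro mult_strict_right_mono) auto
    then have mn: "m < n" using nm by simp
    have IH: "real (tau m) \<le> Bd ^ card {p. prime p \<and> p < P0 \<and> p dvd m} * real m powr eps_d"
      using less.IH[OF mn m0] .
    define Sm where "Sm = {p. prime p \<and> p < P0 \<and> p dvd m}"
    define Sn where "Sn = {p. prime p \<and> p < P0 \<and> p dvd n}"
    have finSn: "finite Sn" by (rule finite_subset[of _ "{..<P0}"]) (auto simp: Sn_def)
    have SmSn: "Sm \<subseteq> Sn" unfolding Sm_def Sn_def nm by auto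
    have npow: "real n powr eps_d = real p powr (real a * eps_d) * real m powr eps_d"
    proof -
      have pp: "real p ^ a = real p powr real a" using p2 by (simp add: powr_realpow)
      have "real n powr eps_d = (real p ^ a * real m) powr eps_d" using nm by simp
      also have "\<dots> = (real p ^ a) powr eps_d * real m powr eps_d" by (rule powr_mult)
      also have "(real p ^ a) powr eps_d = real p powr (real a * eps_d)" unfolding pp by (simp add: powr_powr)
      finally show ?thesis .
    qed
    have t1: "real (tau n) \<le> real (a + 1) * real (tau m)"
      using tau_mult_prime_pow[OF p(1) m0, of a] nm by (metis of_nat_le_iff of_nat_mult)
    have Bp: "Bd ^ card Sn \<ge> 0" using Bd_ge1 by simp
    show ?thesis
    proof (cases "p < P0")
      case True
      have "insert p Sm \<subseteq> Sn" using SmSn True p unfolding Sn_def by auto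
      moreover have "p \<notin> Sm" using npm by (auto simp: Sm_def)
      ultimately have "Suc (card Sm) \<le> card Sn"
        using finSn card_mono[of Sn "insert p Sm"] finite_subset[OF SmSn finSn] by simp
      then have cB: "Bd * Bd ^ card Sm \<le> Bd ^ card Sn"
        using Bd_ge1 by (metis power_Suc power_increasing)
      have "real (tau n) \<le> real (a + 1) * (Bd ^ card Sm * real m powr eps_d)"
        using t1 IH unfolding Sm_def by (smt (verit) mult_left_mono of_nat_0_le_iff)
      also have "\<dots> \<le> (Bd * real p powr (real a * eps_d)) * (Bd ^ card Sm * real m powr eps_d)"
        using num_small[OF p2, of a] Bd_ge1 by (intro mult_right_mono) auto
      also have "\<dots> = (Bd * Bd ^ card Sm) * (real p powr (real a * eps_d) * real m powr eps_d)" by simp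
      also have "\<dots> \<le> Bd ^ card Sn * (real p powr (real a * eps_d) * real m powr eps_d)"
        using cB by (intro mult_right_mono) auto
      finally show ?thesis using npow unfolding Sn_def by simp
    next
      case False
      have cB: "Bd ^ card Sm \<le> Bd ^ card Sn"
        using Bd_ge1 card_mono[OF finSn SmSn] by (rule power_increasing[rotated])
      have "real (tau n) \<le> real (a + 1) * (Bd ^ card Sm * real m powr eps_d)"
        using t1 IH unfolding Sm_def by (smt (verit) mult_left_mono of_nat_0_le_iff)
      also have "\<dots> \<le> real p powr (real a * eps_d) * (Bd ^ card Sm * real m powr eps_d)"
        using num_large[of p a] False Bd_ge1 by (intro mult_right_mono) auto
      also have "\<dots> \<le> real p powr (real a * eps_d) * (Bd ^ card Sn * real m powr eps_d)"
        using cB by (intro mult_left_mono mult_right_mono) auto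
      finally show ?thesis using npow unfolding Sn_def by (simp add: algebra_simps)
    qed
  qed
qed

definition Ctau :: real where "Ctau = Bd ^ P0"

lemma Ctau_ge1: "Ctau \<ge> 1" unfolding Ctau_def using Bd_ge1 by simp

lemma tau_bound: "n > 0 \<Longrightarrow> real (tau n) \<le> Ctau * real n powr eps_d"
proof -
  assume n: "n > 0"
  have "card {p. prime p \<and> p < P0 \<and> p dvd n} \<le> card {..<P0}" by (intro card_mono) auto
  then have "Bd ^ card {p. prime p \<and> p < P0 \<and> p dvd n} \<le> Ctau"
    unfolding Ctau_def using Bd_ge1 by (intro power_increasing) auto
  then show ?thesis using tau_bound_aux[OF n] by (smt (verit) mult_right_mono powr_ge_zero)
qed


lemma sq_identity:
  "(\<Sum>n\<in>{1..N}. of_int \<bar>moebius_mu n\<bar> * e (al * real n)) =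
   (\<Sum>d\<in>{1..N}. of_int (moebius_mu d) * (\<Sum>m\<in>{1..N div d\<^sup>2}. e ((al * real (d\<^sup>2)) * real m)))"
proof -
  have step1: "of_int \<bar>moebius_mu n\<bar> * e (al * real n) =
      (\<Sum>d\<in>{d\<in>{1..N}. d\<^sup>2 dvd n}. of_int (moebius_mu d) * e (al * real n))" if n: "n \<in> {1..N}" for n
  proof -
    have n0: "n > 0" using n by simp
    have set: "{d. d\<^sup>2 dvd n} = {d\<in>{1..N}. d\<^sup>2 dvd n}"
    proof (intro set_eqI iffI)
      fix d assume "d \<in> {d. d\<^sup>2 dvd n}"
      then have d: "d\<^sup>2 dvd n" by simp
      then have "d\<^sup>2 \<le> n" using n0 by (simp add: dvd_imp_le)
      moreover have "d \<le> d\<^sup>2" by (simp add: power2_eq_square le_square)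
      moreover have "d \<noteq> 0" using d n0 by (auto simp: power2_eq_square)
      ultimately show "d \<in> {d\<in>{1..N}. d\<^sup>2 dvd n}" using d n by auto
    qed auto
    have "of_int \<bar>moebius_mu n\<bar> = (of_int (\<Sum>d\<in>{d\<in>{1..N}. d\<^sup>2 dvd n}. moebius_mu d) :: complex)"
      using abs_mu_eq_sum[OF n0] set by simp
    then show ?thesis by (simp add: sum_distrib_right)
  qed
  have "(\<Sum>n\<in>{1..N}. of_int \<bar>moebius_mu n\<bar> * e (al * real n)) =
        (\<Sum>n\<in>{1..N}. \<Sum>d\<in>{d\<in>{1..N}. d\<^sup>2 dvd n}. of_int (moebius_mu d) * e (al * real n))"
    using step1 by (intro sum.cong) auto
  also have "\<dots> = (\<Sum>d\<in>{1..N}. \<Sum>n\<in>{n\<in>{1..N}. d\<^sup>2 dvd n}. of_int (moebius_mu d) * e (al * real n))"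
    by (rule sum.swap_restrict) auto
  also have "\<dots> = (\<Sum>d\<in>{1..N}. of_int (moebius_mu d) * (\<Sum>m\<in>{1..N div d\<^sup>2}. e ((al * real (d\<^sup>2)) * real m)))"
  proof (rule sum.cong[OF refl])
    fix d assume d: "d \<in> {1..N}"
    then have d2: "d\<^sup>2 > 0" by simp
    have img: "{n\<in>{1..N}. d\<^sup>2 dvd n} = (\<lambda>m. d\<^sup>2 * m) ` {1..N div d\<^sup>2}"
    proof (intro set_eqI iffI)
      fix n assume "n \<in> {n\<in>{1..N}. d\<^sup>2 dvd n}"
      then have n: "d\<^sup>2 dvd n" "1 \<le> n" "n \<le> N" by auto
      then obtain m where "n = d\<^sup>2 * m" by (auto elim!: dvdE)
      then have m: "n = d\<^sup>2 * m" "1 \<le> n" "n \<le> N" using n by auto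
      then have "m \<ge> 1" by (cases m) auto
      moreover have "m \<le> N div d\<^sup>2" using m d2 by (simp add: less_eq_div_iff_mult_less_eq mult.commute)
      ultimately show "n \<in> (\<lambda>m. d\<^sup>2 * m) ` {1..N div d\<^sup>2}" using m by auto
    next
      fix n assume "n \<in> (\<lambda>m. d\<^sup>2 * m) ` {1..N div d\<^sup>2}"
      then obtain m where m0: "m \<in> {1..N div d\<^sup>2}" "n = d\<^sup>2 * m" by (rule imageE)
      then have m: "n = d\<^sup>2 * m" "1 \<le> m" "m \<le> N div d\<^sup>2" by auto
      then have "d\<^sup>2 * m \<le> N" using d2 by (simp add: less_eq_div_iff_mult_less_eq mult.commute)
      moreover have "d\<^sup>2 * m \<ge> 1" using m d2 by simp
      ultimately show "n \<in> {n\<in>{1..N}. d\<^sup>2 dvd n}" using m by auto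
    qed
    have inj: "inj_on (\<lambda>m. d\<^sup>2 * m) {1..N div d\<^sup>2}" using d2 by (auto simp: inj_on_def)
    have "(\<Sum>n\<in>{n\<in>{1..N}. d\<^sup>2 dvd n}. of_int (moebius_mu d) * e (al * real n)) =
          (\<Sum>m\<in>{1..N div d\<^sup>2}. of_int (moebius_mu d) * e (al * real (d\<^sup>2 * m)))"
      unfolding img sum.reindex[OF inj] by (simp add: comp_def)
    also have "\<dots> = of_int (moebius_mu d) * (\<Sum>m\<in>{1..N div d\<^sup>2}. e ((al * real (d\<^sup>2)) * real m))"
      by (simp add: sum_distrib_left mult.assoc)
    finally show "(\<Sum>n\<in>{n\<in>{1..N}. d\<^sup>2 dvd n}. of_int (moebius_mu d) * e (al * real n)) =
          of_int (moebius_mu d) * (\<Sum>m\<in>{1..N div d\<^sup>2}. e ((al * real (d\<^sup>2)) * real m))" .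
  qed
  finally show ?thesis .
qed


definition Tsum :: "nat \<Rightarrow> real \<Rightarrow> nat \<Rightarrow> complex" where
  "Tsum N al d = (\<Sum>m\<in>{1..N div d\<^sup>2}. e ((al * real (d\<^sup>2)) * real m))"

lemma abs_mu_le1: "\<bar>moebius_mu n\<bar> \<le> 1"
  by (simp add: moebius_mu_def power_abs)

lemma norm_mu_le1: "norm (of_int (moebius_mu n) :: complex) \<le> 1"
  using abs_mu_le1[of n] by simp

lemma div_real_le: "k > 0 \<Longrightarrow> real (N div k) \<le> real N / real k"
proof -
  assume k: "k > 0"
  have "N div k * k \<le> N" by (metis div_mult_mod_eq le_add1)
  then have "real (N div k) * real k \<le> real N" by (metis of_nat_le_iff of_nat_mult)
  then show ?thesis using k by (simp add: field_simps)
qed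

lemma T_bound: "norm (Tsum N al d) \<le> gm (real (N div d\<^sup>2)) (nd (al * real (d\<^sup>2)))"
  unfolding Tsum_def by (rule geo_sum)

lemma sq_lt: "(d::nat) < 2 * P \<Longrightarrow> d\<^sup>2 < 4 * P\<^sup>2"
proof -
  assume "d < 2 * P"
  then have "d * d < (2 * P) * (2 * P)" by (intro mult_strict_mono) auto
  then show ?thesis by (simp add: power2_eq_square)
qed

context dioph
begin

lemma partA:
  assumes P1: "P \<ge> 1" and finI: "finite I" and Iprop: "\<forall>d\<in>I. P \<le> d \<and> d < 2*P \<and> q \<le> 2*d\<^sup>2"
    and XN: "real N \<le> X" and Inon: "I \<noteq> {}"
  shows "norm (\<Sum>d\<in>I. of_int (moebius_mu d) * Tsum N al d) \<le> 48 * X / q + 24 * (real P)\<^sup>2 * (1 + ln q)"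
proof -
  have X0: "X \<ge> 0" using XN by (smt (verit) of_nat_0_le_iff)
  have qpos: "real q > 0" using q1 by simp
  have lnq: "ln (real q) \<ge> 0" using q1 by simp
  define r where "r = (real P)\<^sup>2"
  have rpos: "r > 0" using P1 by (simp add: r_def)
  define M where "M = X / r"
  have M0: "M \<ge> 0" using X0 rpos by (simp add: M_def)
  have "norm (\<Sum>d\<in>I. of_int (moebius_mu d) * Tsum N al d) \<le> (\<Sum>d\<in>I. norm (of_int (moebius_mu d) * Tsum N al d))"
    by (rule norm_sum)
  also have "\<dots> \<le> (\<Sum>d\<in>I. gm M (nd (al * real (d\<^sup>2))))"
  proof (rule sum_mono)
    fix d assume d: "d \<in> I"
    then have dP: "P \<le> d" using Iprop by auto
    have d0: "d\<^sup>2 > 0" using dP P1 by simp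
    have "norm (of_int (moebius_mu d) * Tsum N al d) \<le> 1 * norm (Tsum N al d)"
      unfolding norm_mult by (intro mult_right_mono norm_mu_le1) auto
    also have "\<dots> \<le> gm (real (N div d\<^sup>2)) (nd (al * real (d\<^sup>2)))" using T_bound by simp
    also have "\<dots> \<le> gm M (nd (al * real (d\<^sup>2)))"
    proof (rule gm_mono)
      have "real (N div d\<^sup>2) \<le> real N / real (d\<^sup>2)" using d0 by (rule div_real_le)
      also have "\<dots> \<le> X / real (d\<^sup>2)" using XN d0 by (intro divide_right_mono) auto
      also have "\<dots> \<le> X / r" unfolding r_def using X0 rpos dP
        by (intro divide_left_mono) (auto simp: r_def power_mono)
      finally show "real (N div d\<^sup>2) \<le> M" by (simp add: M_def)
    qed
    finally show "norm (of_int (moebius_mu d) * Tsum N al d) \<le> gm M (nd (al * real (d\<^sup>2)))" .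
  qed
  also have "\<dots> \<le> (\<Sum>k\<in>{1..4 * P\<^sup>2}. gm M (nd (al * real k)))"
  proof (rule sum_le_inj[where g = "\<lambda>d. d\<^sup>2"])
    show "inj_on (\<lambda>d::nat. d\<^sup>2) I" by (auto simp: inj_on_def)
    show "(\<lambda>d. d\<^sup>2) ` I \<subseteq> {1..4 * P\<^sup>2}"
    proof
      fix k assume "k \<in> (\<lambda>d. d\<^sup>2) ` I"
      then obtain d where d: "d \<in> I" "k = d\<^sup>2" by blast
      then have "P \<le> d" "d < 2 * P" using Iprop by auto
      then show "k \<in> {1..4 * P\<^sup>2}" using d P1 sq_lt[of d P] by auto
    qed
  qed (use M0 in \<open>auto intro: gm_nonneg nd_nonneg\<close>)
  also have "\<dots> \<le> (real (4 * P\<^sup>2) / real q + 1) * (4 * M + 2 * q * (1 + ln q))"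
    using flat[OF M0] by blast
  also have "\<dots> \<le> (12 * r / real q) * (4 * M + 2 * q * (1 + ln q))"
  proof (rule mult_right_mono)
    obtain d where d: "d \<in> I" using Inon by blast
    then have "q \<le> 2 * d\<^sup>2" "d < 2 * P" using Iprop by auto
    then have "q \<le> 8 * P\<^sup>2" using sq_lt[of d P] by linarith
    then have "real q \<le> 8 * r" unfolding r_def by (metis of_nat_le_iff of_nat_mult of_nat_numeral of_nat_power)
    then have "1 \<le> 8 * r / real q" using qpos by (simp add: field_simps)
    then show "real (4 * P\<^sup>2) / real q + 1 \<le> 12 * r / real q"
      unfolding r_def by (simp add: field_simps)
    show "0 \<le> 4 * M + 2 * q * (1 + ln q)" using M0 lnq by simp
  qed
  also have "\<dots> = 48 * X / q + 24 * r * (1 + ln q)"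
    unfolding M_def using rpos qpos by (simp add: field_simps)
  finally show ?thesis by (simp add: r_def)
qed

end


lemma e_add: "e (x + y) = e x * e y"
  unfolding e_def by (simp add: algebra_simps flip: exp_add)

lemma e_cnj: "cnj (e x) = e (- x)"
  unfolding e_def by (simp add: exp_cnj)

lemma e_mult_cnj: "e x * cnj (e y) = e (x - y)"
  by (simp add: e_cnj e_add[symmetric])

lemma sqdiff:
  assumes "d1 < (d2::nat)"
  shows "nat \<bar>int (d1\<^sup>2) - int (d2\<^sup>2)\<bar> = (d2 - d1) * (d2 + d1)"
proof -
  have "int ((d2 - d1) * (d2 + d1)) = (int d2 - int d1) * (int d2 + int d1)"
    using assms by (simp add: of_nat_diff)
  also have "\<dots> = int (d2\<^sup>2) - int (d1\<^sup>2)" by (simp add: algebra_simps power2_eq_square)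
  finally have h: "int ((d2 - d1) * (d2 + d1)) = int (d2\<^sup>2) - int (d1\<^sup>2)" .
  have "d1\<^sup>2 < d2\<^sup>2" using assms by (simp add: power_strict_mono)
  then have "int (d1\<^sup>2) - int (d2\<^sup>2) < 0" by (simp only: of_nat_less_iff diff_less_0_iff_less)
  then have "\<bar>int (d1\<^sup>2) - int (d2\<^sup>2)\<bar> = - (int (d1\<^sup>2) - int (d2\<^sup>2))" by (rule abs_of_neg)
  then have "\<bar>int (d1\<^sup>2) - int (d2\<^sup>2)\<bar> = int (d2\<^sup>2) - int (d1\<^sup>2)" by simp
  then show ?thesis using h by (metis nat_int)
qed

lemma sqdiff_sym: "nat \<bar>int (d1\<^sup>2) - int (d2\<^sup>2)\<bar> = nat \<bar>int (d2\<^sup>2) - int (d1\<^sup>2)\<bar>"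
  by (simp add: abs_minus_commute)

definition kf :: "nat \<times> nat \<Rightarrow> nat" where
  "kf p = nat \<bar>int ((fst p)\<^sup>2) - int ((snd p)\<^sup>2)\<bar>"

lemma pair_fiber:
  assumes k: "k > 0" and A: "A \<subseteq> {p. fst p \<noteq> snd p \<and> kf p = k}"
  shows "card A \<le> 2 * tau k"
proof -
  define f where "f p = (fst p < snd p, if fst p < snd p then snd p - fst p else fst p - snd p)" for p :: "nat \<times> nat"
  have dv: "snd (f p) dvd k" if "p \<in> A" for p
  proof -
    obtain d1 d2 where p: "p = (d1, d2)" by (cases p)
    have ne: "d1 \<noteq> d2" "kf p = k" using that A p by auto
    show ?thesis
    proof (cases "d1 < d2")
      case True
      then have "k = (d2 - d1) * (d2 + d1)" using ne sqdiff[OF True] by (simp add: kf_def p)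
      then show ?thesis using True by (simp add: f_def p)
    next
      case False
      then have lt: "d2 < d1" using ne by simp
      then have "k = (d1 - d2) * (d1 + d2)" using ne sqdiff[OF lt] sqdiff_sym[of d1 d2] by (simp add: kf_def p)
      then show ?thesis using False by (simp add: f_def p)
    qed
  qed
  have inj: "inj_on f A"
  proof (rule inj_onI)
    fix p p' assume pp: "p \<in> A" "p' \<in> A" "f p = f p'"
    obtain d1 d2 where p: "p = (d1, d2)" by (cases p)
    obtain d1' d2' where p': "p' = (d1', d2')" by (cases p')
    have ne: "d1 \<noteq> d2" "kf p = k" "d1' \<noteq> d2'" "kf p' = k" using pp A p p' by auto
    show "p = p'"
    proof (cases "d1 < d2")
      case True
      then have T': "d1' < d2'" using pp(3) by (simp add: f_def p p')
      have u: "d2 - d1 = d2' - d1'" using pp(3) True T' by (simp add: f_def p p')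
      have "(d2 - d1) * (d2 + d1) = (d2' - d1') * (d2' + d1')"
        using ne sqdiff[OF True] sqdiff[OF T'] by (simp add: kf_def p p')
      then have "d2 + d1 = d2' + d1'" using u True T' by simp
      then show ?thesis using u True T' p p' by auto
    next
      case False
      then have lt: "d2 < d1" using ne by simp
      then have F': "\<not> d1' < d2'" using pp(3) False by (simp add: f_def p p')
      then have lt': "d2' < d1'" using ne by simp
      have u: "d1 - d2 = d1' - d2'" using pp(3) False F' by (simp add: f_def p p')
      have "(d1 - d2) * (d1 + d2) = (d1' - d2') * (d1' + d2')"
        using ne sqdiff[OF lt] sqdiff[OF lt'] sqdiff_sym[of d1 d2] sqdiff_sym[of d1' d2'] by (simp add: kf_def p p')
      then have "d1 + d2 = d1' + d2'" using u lt lt' by simp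
      then show ?thesis using u lt lt' p p' by auto
    qed
  qed
  have img: "f ` A \<subseteq> UNIV \<times> {u. u dvd k}"
  proof
    fix y assume "y \<in> f ` A"
    then obtain p where "p \<in> A" "y = f p" by blast
    then show "y \<in> UNIV \<times> {u. u dvd k}" using dv[of p] by (simp add: mem_Times_iff)
  qed
  have fin: "finite (UNIV \<times> {u. u dvd k} :: (bool \<times> nat) set)" using finite_divisors_nat'[OF k] by simp
  have "card A \<le> card (UNIV \<times> {u. u dvd k} :: (bool \<times> nat) set)"
    using card_inj_on_le[OF inj img fin] .
  also have "\<dots> = 2 * tau k" by (simp add: card_cartesian_product tau_def)
  finally show ?thesis .
qed

lemma range_set:
  assumes "P \<ge> 1" "P \<le> (d::nat)"
  shows "{1..N div d\<^sup>2} = {m\<in>{1..N div P\<^sup>2}. d\<^sup>2 * m \<le> N}"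
proof -
  have d0: "d\<^sup>2 > 0" "P\<^sup>2 > 0" using assms by auto
  have PP: "P\<^sup>2 \<le> d\<^sup>2" using assms by (simp add: power_mono)
  show ?thesis
  proof (intro set_eqI iffI)
    fix m assume "m \<in> {1..N div d\<^sup>2}"
    then have m: "1 \<le> m" "m * d\<^sup>2 \<le> N" using d0 by (auto simp: less_eq_div_iff_mult_less_eq)
    then have "m * P\<^sup>2 \<le> N" using PP by (meson le_trans mult_le_mono2)
    then show "m \<in> {m\<in>{1..N div P\<^sup>2}. d\<^sup>2 * m \<le> N}" using m d0 by (auto simp: less_eq_div_iff_mult_less_eq mult.commute)
  next
    fix m assume "m \<in> {m\<in>{1..N div P\<^sup>2}. d\<^sup>2 * m \<le> N}"
    then show "m \<in> {1..N div d\<^sup>2}" using d0 by (auto simp: less_eq_div_iff_mult_less_eq mult.commute)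
  qed
qed


lemma nd_abs_mult: "nd (c * \<bar>x\<bar>) = nd (c * x)"
  by (cases "x \<ge> 0") (auto simp: nd_minus[of "c * x", symmetric])

lemma real_kf: "real (kf p) = \<bar>real ((fst p)\<^sup>2) - real ((snd p)\<^sup>2)\<bar>"
proof -
  have "real (kf p) = real_of_int (int (nat \<bar>int ((fst p)\<^sup>2) - int ((snd p)\<^sup>2)\<bar>))" by (simp add: kf_def)
  also have "\<dots> = real_of_int \<bar>int ((fst p)\<^sup>2) - int ((snd p)\<^sup>2)\<bar>" by simp
  also have "\<dots> = \<bar>real ((fst p)\<^sup>2) - real ((snd p)\<^sup>2)\<bar>" by simp
  finally show ?thesis .
qed

lemma kf_range:
  assumes "fst p \<noteq> snd p" "fst p < 2 * P" "snd p < 2 * P"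
  shows "kf p \<in> {1..4 * P\<^sup>2}"
proof -
  obtain d1 d2 where p: "p = (d1, d2)" by (cases p)
  have "d1\<^sup>2 < 4 * P\<^sup>2" "d2\<^sup>2 < 4 * P\<^sup>2" using assms sq_lt p by auto
  moreover have "d1\<^sup>2 \<noteq> d2\<^sup>2" using assms p by (simp add: power2_eq_iff_nonneg)
  ultimately have "int (d1\<^sup>2) < int (4 * P\<^sup>2)" "int (d2\<^sup>2) < int (4 * P\<^sup>2)" "int (d1\<^sup>2) \<noteq> int (d2\<^sup>2)"
    by (simp_all only: of_nat_less_iff of_nat_eq_iff) simp
  then have "\<bar>int (d1\<^sup>2) - int (d2\<^sup>2)\<bar> \<ge> 1" "\<bar>int (d1\<^sup>2) - int (d2\<^sup>2)\<bar> \<le> int (4 * P\<^sup>2)" by linarith+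
  then show ?thesis unfolding kf_def p by (auto simp: nat_le_iff)
qed


context dioph
begin

lemma offdiag_bound:
  assumes P1: "P \<ge> 1" and finI: "finite I" and Iprop: "\<forall>d\<in>I. P \<le> d \<and> d < 2*P" and M0: "M \<ge> 0"
  shows "(\<Sum>d1\<in>I. \<Sum>d2\<in>I. gm M (nd (al * real (d1\<^sup>2) - al * real (d2\<^sup>2))))
         \<le> real P * M + 2 * Ctau * (4 * (real P)\<^sup>2) powr eps_d * (\<Sum>k\<in>{1..4*P\<^sup>2}. gm M (nd (al * real k)))"
proof -
  define F where "F p = gm M (nd (al * real ((fst p)\<^sup>2) - al * real ((snd p)\<^sup>2)))" for p :: "nat \<times> nat"
  define G where "G k = gm M (nd (al * real k))" for k :: nat
  define Dg where "Dg = {p\<in>I \<times> I. fst p = snd p}"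
  define Off where "Off = {p\<in>I \<times> I. fst p \<noteq> snd p}"
  define R where "R = 2 * Ctau * (4 * (real P)\<^sup>2) powr eps_d"
  have G0: "G k \<ge> 0" for k using M0 by (simp add: G_def gm_nonneg nd_nonneg)
  have finII: "finite (I \<times> I)" using finI by simp
  have "(\<Sum>d1\<in>I. \<Sum>d2\<in>I. gm M (nd (al * real (d1\<^sup>2) - al * real (d2\<^sup>2)))) = (\<Sum>p\<in>I \<times> I. F p)"
    unfolding F_def by (simp add: sum.cartesian_product split_beta)
  also have "\<dots> = (\<Sum>p\<in>Dg. F p) + (\<Sum>p\<in>Off. F p)"
  proof -
    have "I \<times> I = Dg \<union> Off" by (auto simp: Dg_def Off_def)
    moreover have "Dg \<inter> Off = {}" by (auto simp: Dg_def Off_def)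
    moreover have "finite Dg" "finite Off" using finII by (auto simp: Dg_def Off_def)
    ultimately show ?thesis by (simp add: sum.union_disjoint)
  qed
  also have "(\<Sum>p\<in>Dg. F p) \<le> real P * M"
  proof -
    have "(\<Sum>p\<in>Dg. F p) = (\<Sum>p\<in>Dg. M)"
      by (intro sum.cong) (auto simp: F_def Dg_def gm_def nd_def)
    also have "\<dots> = real (card Dg) * M" by simp
    also have "card Dg = card I"
    proof -
      have "Dg = (\<lambda>d. (d, d)) ` I" by (auto simp: Dg_def)
      moreover have "inj_on (\<lambda>d. (d, d)) I" by (auto simp: inj_on_def)
      ultimately show ?thesis by (simp add: card_image)
    qed
    also have "card I \<le> P"
    proof -
      have "I \<subseteq> {P..<2*P}" using Iprop by auto
      then have "card I \<le> card {P..<2*P}" by (intro card_mono) auto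
      then show ?thesis by simp
    qed
    finally show ?thesis using M0 by (simp add: mult_right_mono)
  qed
  also have "(\<Sum>p\<in>Off. F p) = (\<Sum>p\<in>Off. G (kf p))"
  proof (rule sum.cong[OF refl])
    fix p assume "p \<in> Off"
    have "al * real ((fst p)\<^sup>2) - al * real ((snd p)\<^sup>2) = al * (real ((fst p)\<^sup>2) - real ((snd p)\<^sup>2))"
      by (simp add: algebra_simps)
    then show "F p = G (kf p)" unfolding F_def G_def real_kf nd_abs_mult by simp
  qed
  also have "\<dots> = (\<Sum>k\<in>{1..4*P\<^sup>2}. \<Sum>p\<in>{p\<in>Off. kf p = k}. G (kf p))"
  proof (rule sum.group[symmetric])
    show "finite Off" using finII by (simp add: Off_def)
    show "kf ` Off \<subseteq> {1..4*P\<^sup>2}"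
    proof
      fix k assume "k \<in> kf ` Off"
      then obtain p where p: "p \<in> Off" "k = kf p" by blast
      then have "fst p \<noteq> snd p" "fst p < 2 * P" "snd p < 2 * P" using Iprop by (auto simp: Off_def)
      then show "k \<in> {1..4*P\<^sup>2}" using kf_range[of p P] p by simp
    qed
  qed simp
  also have "\<dots> \<le> (\<Sum>k\<in>{1..4*P\<^sup>2}. R * G k)"
  proof (rule sum_mono)
    fix k assume k: "k \<in> {1..4*P\<^sup>2}"
    have "(\<Sum>p\<in>{p\<in>Off. kf p = k}. G (kf p)) = (\<Sum>p\<in>{p\<in>Off. kf p = k}. G k)" by simp
    also have "\<dots> = real (card {p\<in>Off. kf p = k}) * G k" by simp
    also have "\<dots> \<le> R * G k"
    proof (rule mult_right_mono[OF _ G0])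
      have "card {p\<in>Off. kf p = k} \<le> 2 * tau k"
        using k by (intro pair_fiber) (auto simp: Off_def)
      then have "real (card {p\<in>Off. kf p = k}) \<le> 2 * real (tau k)" by simp
      also have "\<dots> \<le> 2 * (Ctau * real k powr eps_d)" using tau_bound[of k] k by simp
      also have "real k powr eps_d \<le> (4 * (real P)\<^sup>2) powr eps_d"
      proof (rule powr_mono2)
        have "k \<le> 4 * P\<^sup>2" using k by simp
        then have "real k \<le> real (4 * P\<^sup>2)" by (simp only: of_nat_le_iff)
        then show "real k \<le> 4 * (real P)\<^sup>2" by simp
      qed (auto simp: eps_d_def)
      finally show "real (card {p\<in>Off. kf p = k}) \<le> R"
        unfolding R_def using Ctau_ge1 by (simp add: mult_left_mono)
    qed
    finally show "(\<Sum>p\<in>{p\<in>Off. kf p = k}. G (kf p)) \<le> R * G k" .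
  qed
  also have "\<dots> = R * (\<Sum>k\<in>{1..4*P\<^sup>2}. gm M (nd (al * real k)))"
    by (simp add: sum_distrib_left G_def)
  finally show ?thesis by (simp add: R_def)
qed


lemma partB_aux:
  assumes P1: "P \<ge> 1" and finI: "finite I" and Iprop: "\<forall>d\<in>I. P \<le> d \<and> d < 2*P"
  shows "(norm (\<Sum>d\<in>I. of_int (moebius_mu d) * Tsum N al d))\<^sup>2 \<le>
     real (N div P\<^sup>2) * (\<Sum>d1\<in>I. \<Sum>d2\<in>I. gm (real (N div P\<^sup>2)) (nd (al * real (d1\<^sup>2) - al * real (d2\<^sup>2))))"
proof -
  define M0 where "M0 = N div P\<^sup>2"
  define c where "c m d = (if d\<^sup>2 * m \<le> N then of_int (moebius_mu d) * e ((al * real (d\<^sup>2)) * real m) else 0)" for m d :: nat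
  define U where "U m = (\<Sum>d\<in>I. c m d)" for m
  have dP: "d \<in> I \<Longrightarrow> P \<le> d" for d using Iprop by auto
  have S_eq: "(\<Sum>d\<in>I. of_int (moebius_mu d) * Tsum N al d) = (\<Sum>m\<in>{1..M0}. U m)"
  proof -
    have "(\<Sum>d\<in>I. of_int (moebius_mu d) * Tsum N al d) = (\<Sum>d\<in>I. \<Sum>m\<in>{1..M0}. c m d)"
    proof (rule sum.cong[OF refl])
      fix d assume d: "d \<in> I"
      have "of_int (moebius_mu d) * Tsum N al d =
            (\<Sum>m\<in>{m\<in>{1..M0}. d\<^sup>2 * m \<le> N}. of_int (moebius_mu d) * e ((al * real (d\<^sup>2)) * real m))"
        unfolding Tsum_def range_set[OF P1 dP[OF d]] M0_def by (simp add: sum_distrib_left)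
      also have "\<dots> = (\<Sum>m\<in>{1..M0}. c m d)"
        unfolding c_def by (rule sum.inter_filter) simp
      finally show "of_int (moebius_mu d) * Tsum N al d = (\<Sum>m\<in>{1..M0}. c m d)" .
    qed
    also have "\<dots> = (\<Sum>m\<in>{1..M0}. U m)" unfolding U_def by (rule sum.swap)
    finally show ?thesis .
  qed
  have B2: "(norm (\<Sum>m\<in>{1..M0}. U m))\<^sup>2 \<le> real M0 * (\<Sum>m\<in>{1..M0}. (norm (U m))\<^sup>2)"
  proof -
    have "norm (\<Sum>m\<in>{1..M0}. U m) \<le> (\<Sum>m\<in>{1..M0}. norm (U m))" by (rule norm_sum)
    then have "(norm (\<Sum>m\<in>{1..M0}. U m))\<^sup>2 \<le> (\<Sum>m\<in>{1..M0}. norm (U m))\<^sup>2"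
      by (intro power_mono) auto
    also have "\<dots> \<le> (\<Sum>m\<in>{1..M0}. (norm (U m))\<^sup>2) * real (card {1..M0})"
      by (rule sum_squared_le_sum_of_squares)
    finally show ?thesis by (simp add: mult.commute)
  qed
  define \<theta> where "\<theta> d1 d2 = al * real (d1\<^sup>2) - al * real (d2\<^sup>2)" for d1 d2 :: nat
  have B3: "complex_of_real (\<Sum>m\<in>{1..M0}. (norm (U m))\<^sup>2) =
      (\<Sum>d1\<in>I. \<Sum>d2\<in>I. of_int (moebius_mu d1 * moebius_mu d2) *
          (\<Sum>m\<in>{1..min (N div d1\<^sup>2) (N div d2\<^sup>2)}. e (\<theta> d1 d2 * real m)))"
  proof -
    have "complex_of_real (\<Sum>m\<in>{1..M0}. (norm (U m))\<^sup>2) = (\<Sum>m\<in>{1..M0}. U m * cnj (U m))"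
      by (simp only: of_real_sum complex_norm_square)
    also have "\<dots> = (\<Sum>m\<in>{1..M0}. \<Sum>d1\<in>I. \<Sum>d2\<in>I. c m d1 * cnj (c m d2))"
      unfolding U_def by (simp add: sum_product cnj_sum)
    also have "\<dots> = (\<Sum>d1\<in>I. \<Sum>m\<in>{1..M0}. \<Sum>d2\<in>I. c m d1 * cnj (c m d2))"
      by (rule sum.swap)
    also have "\<dots> = (\<Sum>d1\<in>I. \<Sum>d2\<in>I. \<Sum>m\<in>{1..M0}. c m d1 * cnj (c m d2))"
      by (rule sum.cong[OF refl], rule sum.swap)
    also have "\<dots> = (\<Sum>d1\<in>I. \<Sum>d2\<in>I. of_int (moebius_mu d1 * moebius_mu d2) *
          (\<Sum>m\<in>{1..min (N div d1\<^sup>2) (N div d2\<^sup>2)}. e (\<theta> d1 d2 * real m)))"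
    proof (intro sum.cong[OF refl])
      fix d1 d2 assume d1: "d1 \<in> I" and d2: "d2 \<in> I"
      have cc: "c m d1 * cnj (c m d2) = (if d1\<^sup>2 * m \<le> N \<and> d2\<^sup>2 * m \<le> N then
             of_int (moebius_mu d1 * moebius_mu d2) * e (\<theta> d1 d2 * real m) else 0)" for m
      proof -
        have "e ((al * real (d1\<^sup>2)) * real m) * cnj (e ((al * real (d2\<^sup>2)) * real m)) = e (\<theta> d1 d2 * real m)"
          unfolding e_mult_cnj \<theta>_def by (simp add: algebra_simps)
        then show ?thesis unfolding c_def by (auto simp: algebra_simps)
      qed
      have set: "{m\<in>{1..M0}. d1\<^sup>2 * m \<le> N \<and> d2\<^sup>2 * m \<le> N} = {1..min (N div d1\<^sup>2) (N div d2\<^sup>2)}"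
      proof -
        have "{1..min (N div d1\<^sup>2) (N div d2\<^sup>2)} = {1..N div d1\<^sup>2} \<inter> {1..N div d2\<^sup>2}" by auto
        also have "\<dots> = {m\<in>{1..M0}. d1\<^sup>2 * m \<le> N} \<inter> {m\<in>{1..M0}. d2\<^sup>2 * m \<le> N}"
          unfolding M0_def by (simp only: range_set[OF P1 dP[OF d1], of N, symmetric] range_set[OF P1 dP[OF d2], of N, symmetric])
        also have "\<dots> = {m\<in>{1..M0}. d1\<^sup>2 * m \<le> N \<and> d2\<^sup>2 * m \<le> N}" by auto
        finally show ?thesis by simp
      qed
      have "(\<Sum>m\<in>{1..M0}. c m d1 * cnj (c m d2)) =
            (\<Sum>m\<in>{m\<in>{1..M0}. d1\<^sup>2 * m \<le> N \<and> d2\<^sup>2 * m \<le> N}. of_int (moebius_mu d1 * moebius_mu d2) * e (\<theta> d1 d2 * real m))"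
        unfolding cc by (rule sum.inter_filter[symmetric]) simp
      also have "\<dots> = of_int (moebius_mu d1 * moebius_mu d2) * (\<Sum>m\<in>{1..min (N div d1\<^sup>2) (N div d2\<^sup>2)}. e (\<theta> d1 d2 * real m))"
        unfolding set by (simp add: sum_distrib_left)
      finally show "(\<Sum>m\<in>{1..M0}. c m d1 * cnj (c m d2)) = of_int (moebius_mu d1 * moebius_mu d2) * (\<Sum>m\<in>{1..min (N div d1\<^sup>2) (N div d2\<^sup>2)}. e (\<theta> d1 d2 * real m))" .
    qed
    finally show ?thesis .
  qed
  have B3': "(\<Sum>m\<in>{1..M0}. (norm (U m))\<^sup>2) \<le> (\<Sum>d1\<in>I. \<Sum>d2\<in>I. gm (real M0) (nd (\<theta> d1 d2)))"
  proof -
    have "(\<Sum>m\<in>{1..M0}. (norm (U m))\<^sup>2) = norm (complex_of_real (\<Sum>m\<in>{1..M0}. (norm (U m))\<^sup>2))"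
      unfolding norm_of_real by (rule abs_of_nonneg[symmetric]) (simp add: sum_nonneg)
    also have "\<dots> \<le> (\<Sum>d1\<in>I. \<Sum>d2\<in>I. norm (of_int (moebius_mu d1 * moebius_mu d2) *
          (\<Sum>m\<in>{1..min (N div d1\<^sup>2) (N div d2\<^sup>2)}. e (\<theta> d1 d2 * real m))))"
      unfolding B3 by (rule order_trans[OF norm_sum sum_mono[OF norm_sum]])
    also have "\<dots> \<le> (\<Sum>d1\<in>I. \<Sum>d2\<in>I. gm (real M0) (nd (\<theta> d1 d2)))"
    proof (intro sum_mono)
      fix d1 d2 assume d1: "d1 \<in> I" and d2: "d2 \<in> I"
      have mu: "norm (of_int (moebius_mu d1 * moebius_mu d2) :: complex) \<le> 1"
      proof -
        have "norm (of_int (moebius_mu d1 * moebius_mu d2) :: complex) = norm (of_int (moebius_mu d1) :: complex) * norm (of_int (moebius_mu d2) :: complex)"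
          by (simp only: of_int_mult norm_mult)
        also have "\<dots> \<le> 1" using norm_mu_le1[of d1] norm_mu_le1[of d2] by (intro mult_le_one) auto
        finally show ?thesis .
      qed
      have "min (N div d1\<^sup>2) (N div d2\<^sup>2) \<le> M0"
        using dP[OF d1] P1 unfolding M0_def by (metis div_le_mono2 min.coboundedI1 power_mono zero_le zero_less_power le_less_trans less_one not_le)
      then have mm: "real (min (N div d1\<^sup>2) (N div d2\<^sup>2)) \<le> real M0" by simp
      have "norm (of_int (moebius_mu d1 * moebius_mu d2) * (\<Sum>m\<in>{1..min (N div d1\<^sup>2) (N div d2\<^sup>2)}. e (\<theta> d1 d2 * real m)))
          \<le> 1 * norm (\<Sum>m\<in>{1..min (N div d1\<^sup>2) (N div d2\<^sup>2)}. e (\<theta> d1 d2 * real m))"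
        unfolding norm_mult by (intro mult_right_mono mu) auto
      also have "\<dots> \<le> gm (real (min (N div d1\<^sup>2) (N div d2\<^sup>2))) (nd (\<theta> d1 d2))" using geo_sum by simp
      also have "\<dots> \<le> gm (real M0) (nd (\<theta> d1 d2))" using mm by (rule gm_mono)
      finally show "norm (of_int (moebius_mu d1 * moebius_mu d2) * (\<Sum>m\<in>{1..min (N div d1\<^sup>2) (N div d2\<^sup>2)}. e (\<theta> d1 d2 * real m))) \<le> gm (real M0) (nd (\<theta> d1 d2))" .
    qed
    finally show ?thesis .
  qed
  have "(norm (\<Sum>d\<in>I. of_int (moebius_mu d) * Tsum N al d))\<^sup>2 \<le> real M0 * (\<Sum>m\<in>{1..M0}. (norm (U m))\<^sup>2)"
    using S_eq B2 by simp
  also have "\<dots> \<le> real M0 * (\<Sum>d1\<in>I. \<Sum>d2\<in>I. gm (real M0) (nd (\<theta> d1 d2)))"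
    using B3' by (intro mult_left_mono) auto
  finally show ?thesis unfolding M0_def \<theta>_def .
qed

end


lemma numB:
  fixes v X P M q E R L S :: real
  assumes v1: "v \<ge> 1" and X: "X = v ^ 10" and Pv: "P \<ge> v ^ 3" and M0: "0 \<le> M" and MX: "M \<le> X / P\<^sup>2"
    and q1: "q \<ge> 1" and E1: "E \<ge> 1" and R0: "0 \<le> R" and RE: "R \<le> E" and L0: "0 \<le> L" and L1: "L \<le> L1" and L11: "1 \<le> L1"
    and S0: "S \<ge> 0" and SS: "S\<^sup>2 \<le> M * (P * M + R * ((4 * P\<^sup>2 / q + 1) * (4 * M + 2 * q * L)))"
  shows "S \<le> 5 * (X / q + v^6 * E * L1 + q)"
proof -
  define m where "m = X / P\<^sup>2"
  define Y where "Y = v^6 * E * L1"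
  define A where "A = X / q"
  have v0: "v > 0" using v1 by simp
  have P0: "P > 0" using Pv v0 by (smt (verit) zero_less_power)
  have q0: "q > 0" using q1 by simp
  have m0: "m \<ge> 0" unfolding m_def X using v0 by simp
  have Y0: "Y \<ge> 0" unfolding Y_def using v0 E1 L11 by simp
  have A0: "A \<ge> 0" unfolding A_def X using v0 q0 by simp
  have step1: "S\<^sup>2 \<le> m * (P * m + E * ((4 * P\<^sup>2 / q + 1) * (4 * m + 2 * q * L1)))"
  proof -
    have Mm: "M \<le> m" using MX by (simp add: m_def)
    have "2 * q * L \<le> 2 * q * L1" using L1 q0 by simp
    then have a: "4 * M + 2 * q * L \<le> 4 * m + 2 * q * L1" using Mm by linarith
    have b: "0 \<le> 4 * P\<^sup>2 / q + 1" using q0 by simp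
    have c: "0 \<le> 4 * M + 2 * q * L" using M0 L0 q0 by simp
    have "R * ((4 * P\<^sup>2 / q + 1) * (4 * M + 2 * q * L)) \<le> E * ((4 * P\<^sup>2 / q + 1) * (4 * m + 2 * q * L1))"
      using RE a b c E1 R0 by (intro mult_mono mult_left_mono) auto
    moreover have "P * M \<le> P * m" using Mm P0 by simp
    ultimately have "P * M + R * ((4 * P\<^sup>2 / q + 1) * (4 * M + 2 * q * L)) \<le> P * m + E * ((4 * P\<^sup>2 / q + 1) * (4 * m + 2 * q * L1))"
      by simp
    moreover have "0 \<le> P * M + R * ((4 * P\<^sup>2 / q + 1) * (4 * M + 2 * q * L))" using P0 M0 R0 b c by simp
    ultimately have "M * (P * M + R * ((4 * P\<^sup>2 / q + 1) * (4 * M + 2 * q * L))) \<le> m * (P * m + E * ((4 * P\<^sup>2 / q + 1) * (4 * m + 2 * q * L1)))"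
      using Mm M0 by (intro mult_mono) auto
    then show ?thesis using SS by linarith
  qed
  have expand: "m * (P * m + E * ((4 * P\<^sup>2 / q + 1) * (4 * m + 2 * q * L1))) =
      X^2 / P^3 + 16 * E * X^2 / (P^2 * q) + 8 * E * L1 * X + 4 * E * X^2 / P^4 + 2 * E * q * L1 * X / P^2"
    unfolding m_def using P0 q0 by (simp add: field_simps power2_eq_square power3_eq_cube power4_eq_xxxx)
  have pw: "(v^3)^k \<le> P^k" for k using Pv v0 by (intro power_mono) auto
  have p2: "v^6 \<le> P^2" using pw[of 2] by (simp flip: power_mult)
  have p3: "v^9 \<le> P^3" using pw[of 3] by (simp flip: power_mult)
  have p4: "v^12 \<le> P^4" using pw[of 4] by (simp flip: power_mult)
  have vp: "v^k > 0" for k using v0 by simp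
  have X2: "X^2 = v^20" unfolding X by (simp flip: power_mult)
  have EL1: "E * L1 \<ge> 1" using mult_mono[of 1 E 1 L1] E1 L11 by simp
  have EL: "(E * L1)^2 \<ge> 1" using EL1 by (simp add: one_le_power)
  have YY: "Y^2 = v^12 * (E * L1)^2" unfolding Y_def by (simp add: power_mult_distrib power_mult[symmetric] mult_ac)
  have vY: "v^12 \<le> Y^2" unfolding YY using mult_left_mono[OF EL, of "v^12"] vp[of 12] by simp
  have t1: "X^2 / P^3 \<le> Y^2"
  proof -
    have "X^2 / P^3 \<le> v^20 / v^9" unfolding X2 using p3 vp[of 9] vp[of 20] P0 by (intro divide_left_mono) auto
    also have "\<dots> = v^11" using v0 by (simp add: power_add[symmetric] field_simps)
    also have "\<dots> \<le> v^12" using v1 by (intro power_increasing) auto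
    also have "\<dots> \<le> Y^2" by (rule vY)
    finally show ?thesis .
  qed
  have Xp2: "X^2 / P^2 \<le> v^14"
  proof -
    have "X^2 / P^2 \<le> v^20 / v^6" unfolding X2 using p2 vp[of 6] vp[of 20] P0 by (intro divide_left_mono) auto
    also have "\<dots> = v^14" using v0 by (simp add: field_simps power_add[symmetric])
    finally show ?thesis .
  qed
  have Xp4: "X^2 / P^4 \<le> v^8"
  proof -
    have "X^2 / P^4 \<le> v^20 / v^12" unfolding X2 using p4 vp[of 12] vp[of 20] P0 by (intro divide_left_mono) auto
    also have "\<dots> = v^8" using v0 by (simp add: field_simps power_add[symmetric])
    finally show ?thesis .
  qed
  have Xq2: "X / P^2 \<le> v^4"
  proof -
    have "X / P^2 \<le> v^10 / v^6" unfolding X using p2 vp[of 6] vp[of 10] P0 by (intro divide_left_mono) auto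
    also have "\<dots> = v^4" using v0 by (simp add: field_simps power_add[symmetric])
    finally show ?thesis .
  qed
  have E8: "E^2 * v^8 \<le> Y^2"
  proof -
    have "E^2 \<le> (E * L1)^2" using E1 L11 by (intro power_mono) (auto simp: mult_le_cancel_left1)
    moreover have "v^8 \<le> v^12" using v1 by (intro power_increasing) auto
    ultimately have "E^2 * v^8 \<le> (E * L1)^2 * v^12" using E1 by (intro mult_mono) auto
    then show ?thesis unfolding YY by (simp add: mult.commute)
  qed
  have t2: "16 * E * X^2 / (P^2 * q) \<le> 8 * A^2 + 8 * Y^2"
  proof -
    have "16 * E * X^2 / (P^2 * q) = 16 * E * (X^2 / P^2) / q" by simp
    also have "\<dots> \<le> 16 * E * v^14 / q" using Xp2 E1 q0 by (intro divide_right_mono mult_left_mono) auto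
    also have "\<dots> = 8 * (2 * (v^10 / q) * (E * v^4))" by (simp add: field_simps power_add[symmetric])
    also have "\<dots> \<le> 8 * ((v^10 / q)^2 + (E * v^4)^2)" using sum_squares_bound[of "v^10 / q" "E * v^4"] by simp
    also have "(v^10 / q)^2 = A^2" by (simp add: A_def X)
    also have "(E * v^4)^2 = E^2 * v^8" by (simp add: power_mult_distrib power_mult[symmetric])
    finally have h: "16 * E * X^2 / (P^2 * q) \<le> 8 * (A^2 + E^2 * v^8)" .
    have "8 * (A^2 + E^2 * v^8) \<le> 8 * A^2 + 8 * Y^2" using E8 by (simp add: distrib_left)
    then show ?thesis using h by (rule order_trans[rotated])
  qed
  have t3: "8 * E * L1 * X \<le> 8 * Y^2"
  proof -
    have "E * L1 * X = (E * L1) * v^10" by (simp add: X)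
    also have "\<dots> \<le> (E * L1)^2 * v^12"
    proof (rule mult_mono)
      show "E * L1 \<le> (E * L1)^2" using EL1 mult_left_mono[OF EL1, of "E * L1"] by (simp add: power2_eq_square)
      show "v^10 \<le> v^12" using v1 by (intro power_increasing) auto
    qed (use EL1 vp in auto)
    finally show ?thesis unfolding YY by (simp add: mult.commute)
  qed
  have t4: "4 * E * X^2 / P^4 \<le> 4 * Y^2"
  proof -
    have "4 * E * X^2 / P^4 = 4 * E * (X^2 / P^4)" by simp
    also have "\<dots> \<le> 4 * E * v^8" using Xp4 E1 by (intro mult_left_mono) auto
    also have "E * v^8 \<le> E^2 * v^8" using E1 vp[of 8] by (intro mult_right_mono) (auto simp: power2_eq_square)
    then have "4 * E * v^8 \<le> 4 * (E^2 * v^8)" by simp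
    finally show ?thesis using E8 by linarith
  qed
  have t5: "2 * E * q * L1 * X / P^2 \<le> q^2 + Y^2"
  proof -
    have "2 * E * q * L1 * X / P^2 = 2 * E * q * L1 * (X / P^2)" by simp
    also have "\<dots> \<le> 2 * E * q * L1 * v^4" using Xq2 E1 q0 L11 by (intro mult_left_mono) auto
    also have "\<dots> = 2 * q * (E * L1 * v^4)" by simp
    also have "\<dots> \<le> q^2 + (E * L1 * v^4)^2" using sum_squares_bound[of q "E * L1 * v^4"] by simp
    also have "(E * L1 * v^4)^2 = (E * L1)^2 * v^8" by (simp add: power_mult_distrib power_mult[symmetric])
    also have "\<dots> \<le> (E * L1)^2 * v^12" using v1 EL by (intro mult_left_mono power_increasing) auto
    finally show ?thesis unfolding YY by (simp add: mult.commute)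
  qed
  have "S^2 \<le> 8 * A^2 + q^2 + 22 * Y^2"
    using step1 expand t1 t2 t3 t4 t5 by linarith
  also have "\<dots> \<le> (5 * (A + Y + q))^2"
    using A0 Y0 q0 by (simp add: power2_eq_square algebra_simps)
  finally have sq: "S^2 \<le> (5 * (A + Y + q))^2" .
  have "0 \<le> 5 * (A + Y + q)" using A0 Y0 q0 by simp
  then have "S \<le> 5 * (A + Y + q)" using power2_le_imp_le[OF sq] by blast
  then show ?thesis by (simp add: A_def Y_def)
qed


context dioph
begin

lemma block_bound:
  assumes X2: "X \<ge> 2" and qX: "real q \<le> X" and NX: "real N \<le> X"
    and finI: "finite I" and Iprop: "\<forall>d\<in>I. 2^j \<le> d \<and> d < 2^(Suc j) \<and> q \<le> 2 * d\<^sup>2"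
  defines "v \<equiv> X powr (1/10)"
  defines "E \<equiv> 2 * Ctau * (4 * X) powr eps_d"
  defines "L1 \<equiv> 1 + ln X"
  shows "norm (\<Sum>d\<in>I. of_int (moebius_mu d) * Tsum N al d) \<le> 48 * (X / q + v^6 * E * L1 + q)"
proof -
  define P :: nat where "P = 2^j"
  have P1: "P \<ge> 1" by (simp add: P_def)
  have IP: "\<forall>d\<in>I. P \<le> d \<and> d < 2 * P" using Iprop by (simp add: P_def)
  have qpos: "real q > 0" using q1 by simp
  have X0: "X > 0" using X2 by simp
  have v0: "v > 0" unfolding v_def using X0 by simp
  have v1: "v \<ge> 1" unfolding v_def using X2 by (intro ge_one_powr_ge_zero) auto
  have vX: "X = v ^ 10"
  proof -
    have "v powr 10 = X powr (1/10 * 10)" unfolding v_def by (rule powr_powr)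
    then have "v powr 10 = X" using X0 by simp
    moreover have "v powr 10 = v ^ 10" using v0 powr_realpow[of v 10] by simp
    ultimately show ?thesis by simp
  qed
  have lnX: "ln X \<ge> 0" using X2 by simp
  have lnq: "ln (real q) \<le> ln X" using qX qpos by simp
  have lnq0: "ln (real q) \<ge> 0" using q1 by simp
  have E1: "E \<ge> 1"
  proof -
    have "(4 * X) powr eps_d \<ge> 1" using X2 by (intro ge_one_powr_ge_zero) (auto simp: eps_d_def)
    then have "1 * 1 \<le> Ctau * (4 * X) powr eps_d" using Ctau_ge1 by (intro mult_mono) auto
    then show ?thesis unfolding E_def by simp
  qed
  have L11: "L1 \<ge> 1" unfolding L1_def using lnX by simp
  have W0: "0 \<le> X / q + v^6 * E * L1 + q" using X0 qpos v0 E1 L11 by simp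
  show ?thesis
  proof (cases "I = {}")
    case True then show ?thesis using W0 by simp
  next
    case Inon: False
    show ?thesis
    proof (cases "real P \<le> v^3")
      case True
      have Iq: "\<forall>d\<in>I. P \<le> d \<and> d < 2*P \<and> q \<le> 2*d\<^sup>2" using Iprop by (simp add: P_def)
      have h0: "norm (\<Sum>d\<in>I. of_int (moebius_mu d) * Tsum N al d) \<le> 48 * X / q + 24 * (real P)\<^sup>2 * (1 + ln q)"
        using partA[OF P1 finI Iq NX Inon] .
      have h1: "24 * (real P)\<^sup>2 * (1 + ln q) \<le> 24 * (v^6 * E * L1)"
      proof -
        have "(real P)\<^sup>2 \<le> (v^3)\<^sup>2" using True by (intro power_mono) auto
        then have a: "(real P)\<^sup>2 \<le> v^6" by (simp flip: power_mult)
        have b: "1 + ln q \<le> E * L1"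
        proof -
          have "1 * L1 \<le> E * L1" using E1 L11 by (intro mult_right_mono) auto
          then show ?thesis using lnq unfolding L1_def by simp
        qed
        have "(real P)\<^sup>2 * (1 + ln q) \<le> v^6 * (E * L1)" using a b lnq0 v0 by (intro mult_mono) auto
        then show ?thesis by (simp add: mult_ac)
      qed
      have h: "norm (\<Sum>d\<in>I. of_int (moebius_mu d) * Tsum N al d) \<le> 48 * X / q + 24 * (v^6 * E * L1)"
        using h0 h1 by linarith
      have Y0: "v^6 * E * L1 \<ge> 0" using v0 E1 L11 by simp
      have eq: "48 * (X / q + v^6 * E * L1 + q) = (48 * X / q + 24 * (v^6 * E * L1)) + (24 * (v^6 * E * L1) + 48 * q)"
        by (simp add: algebra_simps)
      have "0 \<le> 24 * (v^6 * E * L1) + 48 * q" using Y0 qpos by simp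
      then show ?thesis unfolding eq using h by linarith
    next
      case False
      then have Pv: "real P \<ge> v^3" by simp
      define M0 where "M0 = N div P\<^sup>2"
      define R where "R = 2 * Ctau * (4 * (real P)\<^sup>2) powr eps_d"
      define S where "S = norm (\<Sum>d\<in>I. of_int (moebius_mu d) * Tsum N al d)"
      have M00: "real M0 \<ge> 0" by simp
      have SS: "S\<^sup>2 \<le> real M0 * (real P * real M0 + R * ((real (4 * P\<^sup>2) / real q + 1) * (4 * real M0 + 2 * q * (1 + ln q))))"
      proof -
        have "S\<^sup>2 \<le> real M0 * (\<Sum>d1\<in>I. \<Sum>d2\<in>I. gm (real M0) (nd (al * real (d1\<^sup>2) - al * real (d2\<^sup>2))))"
          unfolding S_def M0_def by (rule partB_aux[OF P1 finI IP])
        also have "\<dots> \<le> real M0 * (real P * real M0 + R * (\<Sum>k\<in>{1..4*P\<^sup>2}. gm (real M0) (nd (al * real k))))"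
          unfolding R_def using offdiag_bound[OF P1 finI IP M00] by (intro mult_left_mono) auto
        also have "\<dots> \<le> real M0 * (real P * real M0 + R * ((real (4 * P\<^sup>2) / real q + 1) * (4 * real M0 + 2 * q * (1 + ln q))))"
        proof -
          have "R \<ge> 0" unfolding R_def using Ctau_ge1 by simp
          then show ?thesis using flat[OF M00, of "4 * P\<^sup>2"] by (intro mult_left_mono add_left_mono) auto
        qed
        finally show ?thesis .
      qed
      show ?thesis
      proof (cases "M0 = 0")
        case True
        then have "S\<^sup>2 \<le> 0" using SS by simp
        then have "S = 0" by (simp add: S_def)
        then show ?thesis using W0 by (simp add: S_def)
      next
        case False
        then have "P\<^sup>2 \<le> N" unfolding M0_def by (metis div_eq_0_iff not_le power_not_zero zero_neq_numeral P1 not_one_le_zero)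
        then have PX: "(real P)\<^sup>2 \<le> X" using NX by (metis of_nat_le_iff of_nat_power order_trans)
        have RE: "R \<le> E" unfolding R_def E_def using PX Ctau_ge1
          by (intro mult_left_mono powr_mono2) (auto simp: eps_d_def)
        have R0: "0 \<le> R" unfolding R_def using Ctau_ge1 by simp
        have MX: "real M0 \<le> X / (real P)\<^sup>2"
        proof -
          have "real M0 \<le> real N / real (P\<^sup>2)" unfolding M0_def using P1 by (intro div_real_le) auto
          also have "\<dots> \<le> X / real (P\<^sup>2)" using NX P1 by (intro divide_right_mono) auto
          finally show ?thesis by simp
        qed
        have SS': "S\<^sup>2 \<le> real M0 * (real P * real M0 + R * ((4 * (real P)\<^sup>2 / real q + 1) * (4 * real M0 + 2 * real q * (1 + ln q))))"
          using SS by simp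
        have "S \<le> 5 * (X / q + v^6 * E * L1 + q)"
        proof (rule numB[OF v1 vX Pv M00 MX _ E1 R0 RE _ _ L11 _ SS'])
          show "1 \<le> real q" using q1 by simp
          show "0 \<le> 1 + ln (real q)" using lnq0 by simp
          show "1 + ln (real q) \<le> L1" using lnq unfolding L1_def by simp
          show "0 \<le> S" by (simp add: S_def)
        qed
        moreover have "5 * (X / q + v^6 * E * L1 + q) \<le> 48 * (X / q + v^6 * E * L1 + q)" using W0 by (intro mult_right_mono) auto
        ultimately show ?thesis unfolding S_def by (rule order_trans)
      qed
    qed
  qed
qed

end


lemma final_numeric:
  fixes X q lam :: real and k :: nat
  assumes X2: "X \<ge> 2" and q1: "q \<ge> 1" and qX: "q \<le> X" and lam: "lam = ln X"
    and k: "2 ^ k \<le> X"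
    and S: "S \<le> 4 * q * (1 + ln q) + (real k + 1) * (48 * (X / q + (X powr (1/10))^6 * (2 * Ctau * (4 * X) powr eps_d) * (1 + lam) + q))"
  shows "S \<le> 5000 * Ctau * (X / q * lam + X powr (8/13) * lam powr (37/13) + q * lam)"
proof -
  have X0: "X > 0" using X2 by simp
  have q0: "q > 0" using q1 by simp
  have l23: "lam \<ge> 2/3" unfolding lam using ln2_ge_two_thirds X2 by (smt (verit) ln_le_cancel_iff)
  have l0: "lam > 0" using l23 by simp
  have lnq: "ln q \<le> lam" unfolding lam using qX q0 by simp
  have lnq0: "ln q \<ge> 0" using q1 by simp
  have C1: "Ctau \<ge> 1" by (rule Ctau_ge1)
  define T1 where "T1 = X / q * lam"
  define T2 where "T2 = X powr (8/13) * lam powr (37/13)"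
  define T3 where "T3 = q * lam"
  have T10: "T1 \<ge> 0" "T2 \<ge> 0" "T3 \<ge> 0" unfolding T1_def T2_def T3_def using X0 q0 l0 by auto
  have kk: "real k + 1 \<le> 3 * lam"
  proof -
    have "ln ((2::real) ^ k) \<le> ln X" using k X0 by simp
    then have "real k * ln 2 \<le> lam" unfolding lam by (simp add: ln_realpow)
    moreover have "real k * (2/3) \<le> real k * ln 2" using ln2_ge_two_thirds by (intro mult_left_mono) auto
    ultimately show ?thesis using l23 by linarith
  qed
  have A0: "4 * q * (1 + ln q) \<le> 12 * T3"
  proof -
    have "1 + ln q \<le> 3 * lam" using lnq l23 by linarith
    then have "4 * q * (1 + ln q) \<le> 4 * q * (3 * lam)" using q0 by (intro mult_left_mono) auto
    then show ?thesis unfolding T3_def by simp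
  qed
  define v where "v = X powr (1/10)"
  define E where "E = 2 * Ctau * (4 * X) powr eps_d"
  define Y where "Y = v^6 * E * (1 + lam)"
  have v6: "v^6 = X powr (6/10)"
  proof -
    have "v^6 = v powr 6" unfolding v_def using X0 powr_realpow[of "X powr (1/10)" 6] by simp
    also have "\<dots> = X powr (1/10 * 6)" unfolding v_def by (rule powr_powr)
    finally show ?thesis by simp
  qed
  have E4: "E \<le> 4 * Ctau * X powr eps_d"
  proof -
    have "(4 * X) powr eps_d = 4 powr eps_d * X powr eps_d" using X0 by (simp add: powr_mult)
    moreover have "4 powr eps_d \<le> (4::real) powr (1/2)" by (intro powr_mono) (auto simp: eps_d_def)
    moreover have "(4::real) powr (1/2) = 2"
      by (metis powr_half_sqrt real_sqrt_four zero_le_numeral)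
    ultimately have "(4 * X) powr eps_d \<le> 2 * X powr eps_d" by (simp add: mult_right_mono)
    then show ?thesis unfolding E_def using C1 by simp
  qed
  have vX: "v^6 * X powr eps_d \<le> X powr (8/13)"
  proof -
    have "v^6 * X powr eps_d = X powr (6/10 + eps_d)" unfolding v6 by (simp add: powr_add)
    also have "\<dots> \<le> X powr (8/13)" using X2 by (intro powr_mono) (auto simp: eps_d_def)
    finally show ?thesis .
  qed
  have lam2: "lam^2 \<le> 2 * lam powr (37/13)"
  proof -
    have "lam powr (37/13) = lam powr 2 * lam powr (11/13)" by (simp add: powr_add[symmetric])
    also have "lam powr 2 = lam^2" using l0 powr_realpow[of lam 2] by simp
    finally have eq: "lam powr (37/13) = lam^2 * lam powr (11/13)" .
    have "lam powr (11/13) \<ge> 1/2"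
    proof (cases "lam \<ge> 1")
      case True then show ?thesis using ge_one_powr_ge_zero[of lam "11/13"] by simp
    next
      case False
      then have "lam powr 1 \<le> lam powr (11/13)" using l0 by (intro powr_mono') auto
      then show ?thesis using l23 l0 by simp
    qed
    then have "lam^2 * (1/2) \<le> lam^2 * lam powr (11/13)" by (intro mult_left_mono) auto
    then show ?thesis unfolding eq by simp
  qed
  have YL: "lam * Y \<le> 24 * Ctau * T2"
  proof -
    have L1: "1 + lam \<le> 3 * lam" using l23 by linarith
    have "lam * Y = v^6 * E * (lam * (1 + lam))" unfolding Y_def by (simp add: mult_ac)
    also have "\<dots> \<le> v^6 * (4 * Ctau * X powr eps_d) * (3 * lam^2)"
    proof (rule mult_mono)
      show "v^6 * E \<le> v^6 * (4 * Ctau * X powr eps_d)" using E4 X0 by (intro mult_left_mono) (auto simp: v_def)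
      show "lam * (1 + lam) \<le> 3 * lam^2" using L1 l0 mult_left_mono[OF L1, of lam] by (simp add: power2_eq_square)
    qed (use X0 l0 C1 in \<open>auto simp: v_def E_def\<close>)
    also have "\<dots> = 12 * Ctau * (v^6 * X powr eps_d) * lam^2" by (simp add: mult_ac)
    also have "\<dots> \<le> 12 * Ctau * X powr (8/13) * (2 * lam powr (37/13))"
      using vX lam2 C1 X0 by (intro mult_mono mult_left_mono) auto
    also have "\<dots> = 24 * Ctau * T2" unfolding T2_def by simp
    finally show ?thesis .
  qed
  have W0: "0 \<le> X / q + Y + q" unfolding Y_def v_def E_def using X0 q0 l0 C1 by simp
  have "(real k + 1) * (48 * (X / q + Y + q)) \<le> (3 * lam) * (48 * (X / q + Y + q))"
    using kk W0 by (intro mult_right_mono) auto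
  also have "\<dots> = 144 * T1 + 144 * (lam * Y) + 144 * T3" unfolding T1_def T3_def by (simp add: algebra_simps)
  finally have R: "(real k + 1) * (48 * (X / q + Y + q)) \<le> 144 * T1 + 144 * (lam * Y) + 144 * T3" .
  have S': "S \<le> 4 * q * (1 + ln q) + (real k + 1) * (48 * (X / q + Y + q))"
    using S unfolding Y_def v_def E_def .
  have "S \<le> 144 * T1 + 144 * (24 * Ctau * T2) + 156 * T3" using S' R A0 YL by linarith
  also have "\<dots> \<le> 5000 * Ctau * (T1 + T2 + T3)"
  proof -
    have "144 * T1 \<le> 5000 * Ctau * T1" using C1 T10 by (intro mult_right_mono) auto
    moreover have "144 * (24 * Ctau * T2) \<le> 5000 * Ctau * T2" using C1 T10 by (simp add: mult_right_mono)
    moreover have "156 * T3 \<le> 5000 * Ctau * T3" using C1 T10 by (intro mult_right_mono) auto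
    moreover have "5000 * Ctau * (T1 + T2 + T3) = 5000 * Ctau * T1 + 5000 * Ctau * T2 + 5000 * Ctau * T3"
      by (simp add: distrib_left)
    ultimately show ?thesis by linarith
  qed
  finally show ?thesis unfolding T1_def T2_def T3_def .
qed


context dioph
begin

lemma main_bound:
  assumes X2: "X \<ge> 2"
  shows "norm (\<Sum>n\<in>{1..nat \<lfloor>X\<rfloor>}. of_int \<bar>moebius_mu n\<bar> * e (al * real n))
    \<le> 5000 * Ctau * (X / real q * ln X + X powr (8/13) * (ln X) powr (37/13) + real q * ln X)"
proof -
  define N where "N = nat \<lfloor>X\<rfloor>"
  define S where "S = (\<Sum>n\<in>{1..N}. of_int \<bar>moebius_mu n\<bar> * e (al * real n))"
  have X0: "X > 0" using X2 by simp
  have NX: "real N \<le> X" unfolding N_def using X0 by linarith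
  have qpos: "real q > 0" using q1 by simp
  have l23: "ln X \<ge> 2/3" using ln2_ge_two_thirds X2 by (smt (verit) ln_le_cancel_iff)
  have T10: "X / real q * ln X \<ge> 0" "X powr (8/13) * (ln X) powr (37/13) \<ge> 0" "real q * ln X \<ge> 0"
  proof -
    have lX: "ln X \<ge> 0" using l23 by linarith
    show "X / real q * ln X \<ge> 0" using X0 qpos lX by simp
    show "X powr (8/13) * (ln X) powr (37/13) \<ge> 0" by simp
    show "real q * ln X \<ge> 0" using qpos lX by simp
  qed
  have C1: "Ctau \<ge> 1" by (rule Ctau_ge1)
  show ?thesis
  proof (cases "real q > X")
    case True
    have "norm S \<le> (\<Sum>n\<in>{1..N}. norm (of_int \<bar>moebius_mu n\<bar> * e (al * real n)))"
      unfolding S_def by (rule norm_sum)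
    also have "\<dots> \<le> (\<Sum>n\<in>{1..N}. 1)"
    proof (rule sum_mono)
      fix n
      have "norm (of_int \<bar>moebius_mu n\<bar> :: complex) \<le> 1" using abs_mu_le1[of n] by simp
      then show "norm (of_int \<bar>moebius_mu n\<bar> * e (al * real n)) \<le> 1" by (simp add: norm_mult)
    qed
    also have "\<dots> = real N" by simp
    also have "\<dots> \<le> real q" using NX True by simp
    also have "\<dots> \<le> 2 * (real q * ln X)" using l23 qpos mult_left_mono[of "1/2" "ln X" "real q"] by simp
    also have "\<dots> \<le> 5000 * Ctau * (real q * ln X)" using C1 T10 by (intro mult_right_mono) auto
    also have "\<dots> \<le> 5000 * Ctau * (X / real q * ln X + X powr (8/13) * (ln X) powr (37/13) + real q * ln X)"
      using C1 T10 by (intro mult_left_mono) auto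
    finally show ?thesis unfolding S_def N_def .
  next
    case False
    then have qX: "real q \<le> X" by simp
    define D where "D = {1..N}"
    define A0 where "A0 = {d\<in>D. 2 * d\<^sup>2 < q}"
    define Rest where "Rest = {d\<in>D. q \<le> 2 * d\<^sup>2}"
    define f where "f d = of_int (moebius_mu d) * Tsum N al d" for d
    have Seq: "S = (\<Sum>d\<in>D. f d)"
      unfolding S_def D_def f_def Tsum_def by (rule sq_identity)
    have finD: "finite D" by (simp add: D_def)
    have split: "(\<Sum>d\<in>D. f d) = (\<Sum>d\<in>A0. f d) + (\<Sum>d\<in>Rest. f d)"
    proof -
      have "D = A0 \<union> Rest" by (auto simp: A0_def Rest_def)
      moreover have "A0 \<inter> Rest = {}" by (auto simp: A0_def Rest_def)
      moreover have "finite A0" "finite Rest" using finD by (auto simp: A0_def Rest_def)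
      ultimately show ?thesis using sum.union_disjoint[of A0 Rest f] by simp
    qed
    have bA0: "norm (\<Sum>d\<in>A0. f d) \<le> 4 * q * (1 + ln q)"
    proof -
      have "norm (\<Sum>d\<in>A0. f d) \<le> (\<Sum>d\<in>A0. norm (f d))" by (rule norm_sum)
      also have "\<dots> \<le> (\<Sum>d\<in>A0. gm (real N) (nd (al * real (d\<^sup>2))))"
      proof (rule sum_mono)
        fix d assume "d \<in> A0"
        have "norm (f d) \<le> 1 * norm (Tsum N al d)"
          unfolding f_def norm_mult by (intro mult_right_mono norm_mu_le1) auto
        also have "\<dots> \<le> gm (real (N div d\<^sup>2)) (nd (al * real (d\<^sup>2)))" using T_bound by simp
        also have "\<dots> \<le> gm (real N) (nd (al * real (d\<^sup>2)))" by (rule gm_mono) simp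
        finally show "norm (f d) \<le> gm (real N) (nd (al * real (d\<^sup>2)))" .
      qed
      also have "\<dots> \<le> (\<Sum>k\<in>{k. 1 \<le> k \<and> 2 * k < q}. gm (real N) (nd (al * real k)))"
      proof (rule sum_le_inj[where g = "\<lambda>d. d\<^sup>2"])
        show "finite {k. 1 \<le> k \<and> 2 * k < q}" by (rule finite_subset[of _ "{..q}"]) auto
        show "inj_on (\<lambda>d::nat. d\<^sup>2) A0" by (auto simp: inj_on_def)
        show "(\<lambda>d. d\<^sup>2) ` A0 \<subseteq> {k. 1 \<le> k \<and> 2 * k < q}" by (auto simp: A0_def D_def)
      qed (auto intro: gm_nonneg nd_nonneg)
      also have "\<dots> \<le> 4 * q * (1 + ln q)" by (rule small_k)
      finally show ?thesis .
    qed
    define W where "W = X / q + (X powr (1/10))^6 * (2 * Ctau * (4 * X) powr eps_d) * (1 + ln X) + q"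
    define K where "K = floor_log N"
    have bRest: "norm (\<Sum>d\<in>Rest. f d) \<le> (real K + 1) * (48 * W)"
    proof -
      have finR: "finite Rest" using finD by (simp add: Rest_def)
      have img: "floor_log ` Rest \<subseteq> {..K}"
        unfolding K_def by (auto simp: Rest_def D_def intro: floor_log_le_iff)
      have "(\<Sum>d\<in>Rest. f d) = (\<Sum>j\<in>{..K}. \<Sum>d\<in>{d\<in>Rest. floor_log d = j}. f d)"
        by (rule sum.group[symmetric, OF finR _ img]) simp
      then have "norm (\<Sum>d\<in>Rest. f d) \<le> (\<Sum>j\<in>{..K}. norm (\<Sum>d\<in>{d\<in>Rest. floor_log d = j}. f d))"
        by (simp add: norm_sum)
      also have "\<dots> \<le> (\<Sum>j\<in>{..K}. 48 * W)"
      proof (rule sum_mono)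
        fix j
        have Ip: "\<forall>d\<in>{d\<in>Rest. floor_log d = j}. 2^j \<le> d \<and> d < 2^(Suc j) \<and> q \<le> 2 * d\<^sup>2"
        proof
          fix d assume d: "d \<in> {d\<in>Rest. floor_log d = j}"
          then have d0: "d > 0" "floor_log d = j" "q \<le> 2 * d\<^sup>2" by (auto simp: Rest_def D_def)
          have "2 ^ floor_log d \<le> d" using d0(1) by (rule floor_log_exp2_le)
          moreover have "d < 2 * 2 ^ floor_log d" by (rule floor_log_exp2_gt)
          ultimately show "2^j \<le> d \<and> d < 2^(Suc j) \<and> q \<le> 2 * d\<^sup>2" using d0 by simp
        qed
        have "finite {d\<in>Rest. floor_log d = j}" using finR by simp
        then show "norm (\<Sum>d\<in>{d\<in>Rest. floor_log d = j}. f d) \<le> 48 * W"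
          unfolding f_def W_def using block_bound[OF X2 qX NX _ Ip] by simp
      qed
      also have "\<dots> = (real K + 1) * (48 * W)" by simp
      finally show ?thesis .
    qed
    have "norm S \<le> 4 * q * (1 + ln q) + (real K + 1) * (48 * W)"
      using Seq split bA0 bRest norm_triangle_ineq[of "\<Sum>d\<in>A0. f d" "\<Sum>d\<in>Rest. f d"] by simp
    moreover have "2 ^ K \<le> X"
    proof -
      have "N > 0" unfolding N_def using X2 by linarith
      then have "2 ^ K \<le> N" unfolding K_def by (rule floor_log_exp2_le)
      then have "real (2 ^ K) \<le> real N" by (simp only: of_nat_le_iff)
      moreover have "real (2 ^ K) = (2::real) ^ K" by simp
      ultimately show ?thesis using NX by linarith
    qed
    ultimately have "norm S \<le> 5000 * Ctau * (X / q * ln X + X powr (8/13) * (ln X) powr (37/13) + q * ln X)"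
      using final_numeric[OF X2 _ qX refl] q1 unfolding W_def by simp
    then show ?thesis unfolding S_def N_def .
  qed
qed

end

theorem theorem1p10:
  "\<exists>C::real. \<forall>(a::int) (q::nat) (\<beta>::real) (\<alpha>::real) (X::real).
     q \<ge> 1 \<longrightarrow> coprime a (int q) \<longrightarrow> \<bar>\<beta>\<bar> < 1 / (real q)^2 \<longrightarrow>
     \<alpha> = real_of_int a / real q + \<beta> \<longrightarrow> X \<ge> 2 \<longrightarrow>
     norm (\<Sum>n\<in>{1..nat \<lfloor>X\<rfloor>}. of_int \<bar>moebius_mu n\<bar> * e (\<alpha> * real n))
       \<le> C * (X / real q * ln X + X powr (8/13) * (ln X) powr (37/13) + real q * ln X)"
proof (intro exI allI impI)
  fix a :: int and q :: nat and \<beta> \<alpha> X :: real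
  assume h: "q \<ge> 1" "coprime a (int q)" "\<bar>\<beta>\<bar> < 1 / (real q)^2" "\<alpha> = real_of_int a / real q + \<beta>" "X \<ge> 2"
  interpret dioph a q \<beta> \<alpha> using h by unfold_locales auto
  show "norm (\<Sum>n\<in>{1..nat \<lfloor>X\<rfloor>}. of_int \<bar>moebius_mu n\<bar> * e (\<alpha> * real n))
       \<le> 5000 * Ctau * (X / real q * ln X + X powr (8/13) * (ln X) powr (37/13) + real q * ln X)"
    using main_bound[OF h(5)] .
qed


end
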